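(* Let $L\ge1$, $d,k,m$ be positive integers with $m>\max\{d,k\}$, $a_0=d$, $a_L=k$, $a_\ell=m$ for $1\le\ell\le L-1$, let $\mathbf W^\ell\in\mathbb R^{a_\ell\times a_{\ell-1}}$ for $\ell=1,\dots,L$, let $\beta\in\mathbb R$, and let $\boldsymbol\Sigma\in\mathbb R^{d\times d}$ be symmetric positive definite. Define $$\widehat{\mathbf G}_O^\beta=\sum_{\ell=1}^L\big(\mathbf W_\beta^{L:\ell+1}\mathbf W_\beta^{\ell+1:L}\big)\otimes\big(\boldsymbol\Sigma^{1/2}\mathbf W_\beta^{1:\ell-1}\mathbf W_\beta^{\ell-1:1}\boldsymbol\Sigma^{1/2}\big).$$ Assume $\alpha_\ell^\beta:=\sigma_{\min}^2(\mathbf W_\beta^{L:\ell+1})\,\sigma_{\min}^2(\mathbf W_\beta^{1:\ell-1})>0$ for all $\ell$, and let $\gamma_\ell^\beta=\alpha_\ell^\beta/\sum_{i=1}^L\alpha_i^\beta$. Then $\widehat{\mathbf G}_O^\beta$ is positive definite and $$\kappa(\widehat{\mathbf G}_O^\beta)\le\kappa(\boldsymbol\Sigma)\sum_{\ell=1}^L\gamma_\ell^\beta\,\kappa^2(\mathbf W_\beta^{L:\ell+1})\,\kappa^2(\mathbf W_\beta^{1:\ell-1})\le\kappa(\boldsymbol\Sigma)\max_{1\le\ell\le L}\kappa^2(\mathbf W_\beta^{L:\ell+1})\,\kappa^2(\mathbf W_\beta^{1:\ell-1}).$$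
   Context: Here $\mathbf I$ denotes the rectangular identity of the appropriate size ($a_\ell\times a_{\ell-1}$, ones on the main diagonal, zeros elsewhere), so $\mathbf W^\ell+\beta\mathbf I$ is the $\ell$-th layer of the linear residual network $F(\mathbf x)=(\mathbf W^L+\beta\mathbf I)\cdots(\mathbf W^1+\beta\mathbf I)\mathbf x$. For $i>j$, $\mathbf W_\beta^{i:j}=(\mathbf W^i+\beta\mathbf I)\cdots(\mathbf W^j+\beta\mathbf I)$; for $i<j$, $\mathbf W_\beta^{i:j}=(\mathbf W^i+\beta\mathbf I)^\top\cdots(\mathbf W^j+\beta\mathbf I)^\top$; empty products are identities ($\mathbf I_k$ for $\ell=L$ in the first factor, $\mathbf I_d$ for $\ell=1$ in the second). $\boldsymbol\Sigma^{1/2}$ is the positive semidefinite square root, $\otimes$ the Kronecker product. For symmetric positive definite $\mathbf A$, $\kappa(\mathbf A)=\lambda_{\max}/\lambda_{\min}$; for rectangular $\mathbf A\in\mathbb R^{p\times q}$, $\sigma_{\min}(\mathbf A)$ is the $\min(p,q)$-th largest singular value and $\kappa(\mathbf A)=\sigma_{\max}(\mathbf A)/\sigma_{\min}(\mathbf A)$. *)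

theory Defs
  imports "Jordan_Normal_Form.Char_Poly"
begin

definition rect_id :: "nat \<Rightarrow> nat \<Rightarrow> real mat" where
  "rect_id p q = mat p q (\<lambda>(i,j). if i = j then 1 else 0)"

definition widths :: "nat \<Rightarrow> nat \<Rightarrow> nat \<Rightarrow> nat \<Rightarrow> nat \<Rightarrow> nat" where
  "widths L d k m l = (if l = 0 then d else if l = L then k else m)"

definition layer :: "(nat \<Rightarrow> nat) \<Rightarrow> (nat \<Rightarrow> real mat) \<Rightarrow> real \<Rightarrow> nat \<Rightarrow> real mat" where
  "layer a W \<beta> l = W l + \<beta> \<cdot>\<^sub>m rect_id (a l) (a (l - 1))"

(* W_beta^{i:j} for i >= j-1: (W^i + beta I) ... (W^j + beta I); the empty product
   (i = j - 1) is the identity of size a_{j-1} = a_i. *)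
definition Wdown :: "(nat \<Rightarrow> nat) \<Rightarrow> (nat \<Rightarrow> real mat) \<Rightarrow> real \<Rightarrow> nat \<Rightarrow> nat \<Rightarrow> real mat" where
  "Wdown a W \<beta> i j = foldr (\<lambda>l acc. layer a W \<beta> l * acc) (rev [j..<Suc i]) (1\<^sub>m (a (j - 1)))"

(* W_beta^{i:j} for i <= j+1: (W^i + beta I)^T ... (W^j + beta I)^T; the empty product
   (i = j + 1) is the identity of size a_j. *)
definition Wup :: "(nat \<Rightarrow> nat) \<Rightarrow> (nat \<Rightarrow> real mat) \<Rightarrow> real \<Rightarrow> nat \<Rightarrow> nat \<Rightarrow> real mat" where
  "Wup a W \<beta> i j = foldr (\<lambda>l acc. transpose_mat (layer a W \<beta> l) * acc) [i..<Suc j] (1\<^sub>m (a j))"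

definition positive_semidefinite :: "nat \<Rightarrow> real mat \<Rightarrow> bool" where
  "positive_semidefinite n A \<longleftrightarrow> A \<in> carrier_mat n n \<and> transpose_mat A = A \<and>
     (\<forall>x \<in> carrier_vec n. x \<bullet> (A *\<^sub>v x) \<ge> 0)"

definition positive_definite :: "nat \<Rightarrow> real mat \<Rightarrow> bool" where
  "positive_definite n A \<longleftrightarrow> A \<in> carrier_mat n n \<and> transpose_mat A = A \<and>
     (\<forall>x \<in> carrier_vec n. x \<noteq> 0\<^sub>v n \<longrightarrow> x \<bullet> (A *\<^sub>v x) > 0)"

definition psd_sqrt :: "nat \<Rightarrow> real mat \<Rightarrow> real mat" where
  "psd_sqrt n A = (THE S. positive_semidefinite n S \<and> S * S = A)"

definition kron :: "real mat \<Rightarrow> real mat \<Rightarrow> real mat" where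
  "kron A B = mat (dim_row A * dim_row B) (dim_col A * dim_col B)
     (\<lambda>(i,j). A $$ (i div dim_row B, j div dim_col B) * B $$ (i mod dim_row B, j mod dim_col B))"

definition lambda_max :: "real mat \<Rightarrow> real" where
  "lambda_max A = Max {x. eigenvalue A x}"

definition lambda_min :: "real mat \<Rightarrow> real" where
  "lambda_min A = Min {x. eigenvalue A x}"

definition kappa_spd :: "real mat \<Rightarrow> real" where
  "kappa_spd A = lambda_max A / lambda_min A"

(* The
   min(p,q)-th largest singular value of A (p x q) is the square root of the smallest
   eigenvalue of the smaller Gram matrix (A^T A if p >= q, A A^T if p < q). *)
definition sigma_max :: "real mat \<Rightarrow> real" where
  "sigma_max A = sqrt (lambda_max (transpose_mat A * A))"

definition sigma_min :: "real mat \<Rightarrow> real" where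
  "sigma_min A = sqrt (lambda_min (if dim_row A \<ge> dim_col A then transpose_mat A * A
                                    else A * transpose_mat A))"

definition kappa_rect :: "real mat \<Rightarrow> real" where
  "kappa_rect A = sigma_max A / sigma_min A"

end

theory Submission
  imports Defs "Jordan_Normal_Form.Spectral_Radius"
begin

lemma conj_real_vec[simp]: "conjugate (v :: real vec) = v"
  by (rule eq_vecI, auto)

lemma sprod_self_ge0: "(v::real vec) \<bullet> v \<ge> 0"
  using conjugate_square_ge_0_vec[of v] by simp

lemma sprod_self_eq0: "(v::real vec) \<in> carrier_vec n \<Longrightarrow> (v \<bullet> v = 0) = (v = 0\<^sub>v n)"
  using conjugate_square_eq_0_vec[of v n] by simp

lemma sprod_self_gt0: "(v::real vec) \<in> carrier_vec n \<Longrightarrow> v \<noteq> 0\<^sub>v n \<Longrightarrow> v \<bullet> v > 0"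
  using sprod_self_ge0[of v] sprod_self_eq0[of v n] by linarith

lemma mult_mat_vec_index_sum:
  assumes "A \<in> carrier_mat nr nc" "v \<in> carrier_vec nc" "i < nr"
  shows "(A *\<^sub>v v) $ i = (\<Sum>j = 0..<nc. A $$ (i,j) * v $ j)"
  using assms by (auto simp: scalar_prod_def)

lemma sym_sprod:
  fixes M :: "real mat"
  assumes M: "M \<in> carrier_mat n n" and sym: "transpose_mat M = M"
    and x: "x \<in> carrier_vec n" and y: "y \<in> carrier_vec n"
  shows "x \<bullet> (M *\<^sub>v y) = (M *\<^sub>v x) \<bullet> y"
  using transpose_vec_mult_scalar[OF M y x] sym by simp

lemma real_sym_eigen:
  fixes M :: "real mat"
  assumes M: "M \<in> carrier_mat n n" and sym: "transpose_mat M = M" and n: "n > 0"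
  shows "\<exists>e v. v \<in> carrier_vec n \<and> v \<noteq> 0\<^sub>v n \<and> M *\<^sub>v v = e \<cdot>\<^sub>v v"
proof -
  let ?Mc = "map_mat complex_of_real M"
  have Mc: "?Mc \<in> carrier_mat n n" using M by auto
  from spectrum_non_empty[OF Mc n] obtain z where "z \<in> spectrum ?Mc" by auto
  then have "eigenvalue ?Mc z" unfolding spectrum_def by auto
  then obtain w where ev: "eigenvector ?Mc w z" unfolding eigenvalue_def by auto
  hence w: "w \<in> carrier_vec n" "w \<noteq> 0\<^sub>v n" "?Mc *\<^sub>v w = z \<cdot>\<^sub>v w" using Mc unfolding eigenvector_def by auto
  define a where "a = map_vec Re w"
  define b where "b = map_vec Im w"
  have a: "a \<in> carrier_vec n" and b: "b \<in> carrier_vec n" using w unfolding a_def b_def by auto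
  have comp: "(\<Sum>j = 0..<n. complex_of_real (M $$ (i,j)) * w $ j) = z * w $ i" if i: "i<n" for i
  proof -
    have "(?Mc *\<^sub>v w) $ i = (\<Sum>j = 0..<n. ?Mc $$ (i,j) * w $ j)"
      by (rule mult_mat_vec_index_sum[OF Mc w(1) i])
    also have "\<dots> = (\<Sum>j = 0..<n. complex_of_real (M $$ (i,j)) * w $ j)"
      using M i by (intro sum.cong, auto)
    finally show ?thesis using w(3) w(1) i by auto
  qed
  have Ma: "M *\<^sub>v a = Re z \<cdot>\<^sub>v a - Im z \<cdot>\<^sub>v b"
  proof (rule eq_vecI)
    fix i assume "i < dim_vec (Re z \<cdot>\<^sub>v a - Im z \<cdot>\<^sub>v b)"
    hence i: "i < n" using a b by auto
    have "(M *\<^sub>v a) $ i = (\<Sum>j = 0..<n. M $$ (i,j) * a $ j)"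
      by (rule mult_mat_vec_index_sum[OF M a i])
    also have "\<dots> = Re (\<Sum>j = 0..<n. complex_of_real (M $$ (i,j)) * w $ j)"
      unfolding Re_sum using w(1) by (intro sum.cong, auto simp: a_def)
    also have "\<dots> = Re (z * w $ i)" using comp[OF i] by simp
    finally show "(M *\<^sub>v a) $ i = (Re z \<cdot>\<^sub>v a - Im z \<cdot>\<^sub>v b) $ i"
      using i a b w(1) by (simp add: a_def b_def)
  qed (insert M a b, auto)
  have Mb: "M *\<^sub>v b = Re z \<cdot>\<^sub>v b + Im z \<cdot>\<^sub>v a"
  proof (rule eq_vecI)
    fix i assume "i < dim_vec (Re z \<cdot>\<^sub>v b + Im z \<cdot>\<^sub>v a)"
    hence i: "i < n" using a b by auto
    have "(M *\<^sub>v b) $ i = (\<Sum>j = 0..<n. M $$ (i,j) * b $ j)"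
      by (rule mult_mat_vec_index_sum[OF M b i])
    also have "\<dots> = Im (\<Sum>j = 0..<n. complex_of_real (M $$ (i,j)) * w $ j)"
      unfolding Im_sum using w(1) by (intro sum.cong, auto simp: b_def)
    also have "\<dots> = Im (z * w $ i)" using comp[OF i] by simp
    finally show "(M *\<^sub>v b) $ i = (Re z \<cdot>\<^sub>v b + Im z \<cdot>\<^sub>v a) $ i"
      using i a b w(1) by (simp add: a_def b_def algebra_simps)
  qed (insert M a b, auto)
  have "a \<bullet> (M *\<^sub>v b) = (M *\<^sub>v a) \<bullet> b" by (rule sym_sprod[OF M sym a b])
  hence "Re z * (a \<bullet> b) + Im z * (a \<bullet> a) = Re z * (a \<bullet> b) - Im z * (b \<bullet> b)"
    unfolding Ma Mb using a b
    by (simp add: scalar_prod_add_distrib[of _ n] minus_scalar_prod_distrib[of _ n] comm_scalar_prod[of a n b])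
  hence im0: "Im z * (a \<bullet> a + b \<bullet> b) = 0" by (simp add: algebra_simps)
  have "a \<noteq> 0\<^sub>v n \<or> b \<noteq> 0\<^sub>v n"
  proof (rule ccontr)
    assume "\<not> ?thesis"
    hence "a = 0\<^sub>v n" "b = 0\<^sub>v n" by auto
    hence "w = 0\<^sub>v n"
    proof (intro eq_vecI)
      fix i assume "i < dim_vec (0\<^sub>v n :: complex vec)"
      hence i: "i < n" by simp
      have "a $ i = 0" "b $ i = 0" using \<open>a = 0\<^sub>v n\<close> \<open>b = 0\<^sub>v n\<close> i by auto
      thus "w $ i = 0\<^sub>v n $ i" using i w(1) by (simp add: a_def b_def complex_eq_iff)
    qed (insert w(1), auto)
    with w(2) show False by simp
  qed
  hence "a \<bullet> a + b \<bullet> b > 0"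
    using sprod_self_gt0[OF a] sprod_self_gt0[OF b] sprod_self_ge0[of a] sprod_self_ge0[of b] by force
  with im0 have "Im z = 0" by simp
  hence Ma': "M *\<^sub>v a = Re z \<cdot>\<^sub>v a" and Mb': "M *\<^sub>v b = Re z \<cdot>\<^sub>v b"
    unfolding Ma Mb using a b by auto
  show ?thesis using \<open>a \<noteq> 0\<^sub>v n \<or> b \<noteq> 0\<^sub>v n\<close> Ma' Mb' a b by blast
qed

lemma orth_completion:
  fixes v :: "real vec"
  assumes v: "v \<in> carrier_vec n" and v1: "v \<bullet> v = 1"
  shows "\<exists>W \<in> carrier_mat n n. transpose_mat W * W = 1\<^sub>m n \<and> W * transpose_mat W = 1\<^sub>m n \<and> col W 0 = v"
proof -
  have v0: "v \<noteq> 0\<^sub>v n" using v1 v by auto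
  interpret cof_vec_space n "TYPE(real)" .
  define b where "b = basis_completion v"
  from basis_completion[OF v v0, folded b_def]
  have dist_b: "distinct b" and indep: "\<not> lin_dep (set b)" and bc: "set b \<subseteq> carrier_vec n"
    and hdb: "hd b = v" and len_b: "length b = n" by auto
  have n: "n > 0" using v0 v by (cases n, auto)
  from hdb len_b n obtain vs where bv: "b = v # vs" by (cases b, auto)
  define ws where "ws = gram_schmidt n b"
  from gram_schmidt_result[OF bc dist_b indep ws_def]
  have wsc: "set ws \<subseteq> carrier_vec n" and orth: "corthogonal ws" and len: "length ws = n" 
    by (auto simp: len_b)
  have hdws: "hd ws = v" unfolding ws_def bv using gram_schmidt_hd[OF v] by simp
  define c where "c = (\<lambda>w::real vec. 1 / sqrt (w \<bullet> w))"
  define us where "us = map (\<lambda>w. c w \<cdot>\<^sub>v w) ws"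
  have lus: "length us = n" unfolding us_def using len by simp
  have usc: "set us \<subseteq> carrier_vec n" unfolding us_def using wsc by auto
  have wsi: "ws ! i \<in> carrier_vec n" if "i < n" for i using wsc that len by auto
  have usi: "us ! i = c (ws ! i) \<cdot>\<^sub>v ws ! i" if "i < n" for i using that len unfolding us_def by auto
  have ortho: "(ws ! i) \<bullet> (ws ! j) = 0 \<longleftrightarrow> i \<noteq> j" if "i < n" "j < n" for i j
    using corthogonalD[OF orth, of i j] that len by simp
  have pos: "(ws ! i) \<bullet> (ws ! i) > 0" if "i < n" for i
    using ortho[OF that that] sprod_self_ge0[of "ws ! i"] by linarith
  have us_orth: "(us ! i) \<bullet> (us ! j) = (if i = j then 1 else 0)" if i: "i < n" and j: "j < n" for i j
  proof -
    have "(us ! i) \<bullet> (us ! j) = c (ws ! i) * c (ws ! j) * ((ws ! i) \<bullet> (ws ! j))"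
      unfolding usi[OF i] usi[OF j] using wsi[OF i] wsi[OF j] by simp
    also have "\<dots> = (if i = j then 1 else 0)"
    proof (cases "i = j")
      case True
      have p: "(ws ! i) \<bullet> (ws ! i) > 0" by (rule pos[OF i])
      hence "c (ws ! i) * c (ws ! i) * ((ws ! i) \<bullet> (ws ! i)) = 1"
        unfolding c_def by (simp add: real_sqrt_mult[symmetric])
      thus ?thesis using True by simp
    next
      case False thus ?thesis using ortho[OF i j] by simp
    qed
    finally show ?thesis .
  qed
  define W where "W = mat_of_cols n us"
  have W: "W \<in> carrier_mat n n" unfolding W_def using lus by auto
  have colW: "col W i = us ! i" if "i < n" for i
    unfolding W_def using that lus usc by (intro col_mat_of_cols, auto)
  have WW: "transpose_mat W * W = 1\<^sub>m n"
    by (rule eq_matI, insert W colW us_orth, auto)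
  have WW': "W * transpose_mat W = 1\<^sub>m n"
    by (rule mat_mult_left_right_inverse[OF _ W WW], insert W, auto)
  have ws0: "ws ! 0 = v" using hdws len n by (cases ws, auto)
  have "col W 0 = v" unfolding colW[OF n] usi[OF n] ws0 c_def v1 by simp
  with W WW WW' show ?thesis by blast
qed

lemma quad_entry:
  fixes A W :: "real mat"
  assumes A: "A \<in> carrier_mat n n" and W: "W \<in> carrier_mat n n" and i: "i < n" and j: "j < n"
  shows "(transpose_mat W * A * W) $$ (i,j) = col W i \<bullet> (A *\<^sub>v col W j)"
proof -
  have "transpose_mat W * A * W = transpose_mat W * (A * W)" using A W by (simp add: assoc_mult_mat[of _ n n _ n _ n])
  hence "(transpose_mat W * A * W) $$ (i,j) = row (transpose_mat W) i \<bullet> col (A * W) j"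
    using A W i j by simp
  also have "\<dots> = col W i \<bullet> (A *\<^sub>v col W j)" unfolding col_mult2[OF A W j] using W i by simp
  finally show ?thesis .
qed

lemma spectral:
  fixes M :: "real mat"
  assumes "M \<in> carrier_mat n n" "transpose_mat M = M"
  shows "\<exists>U D. U \<in> carrier_mat n n \<and> D \<in> carrier_mat n n \<and> diagonal_mat D \<and>
     transpose_mat U * U = 1\<^sub>m n \<and> U * transpose_mat U = 1\<^sub>m n \<and> M = U * D * transpose_mat U"
  using assms
proof (induct n arbitrary: M)
  case 0
  show ?case
    by (rule exI[of _ "1\<^sub>m 0"], rule exI[of _ M], insert 0, auto simp: diagonal_mat_def)
next
  case (Suc n M)
  note M = Suc(2) and sym = Suc(3)
  from real_sym_eigen[OF M sym] obtain e v0 where v0: "v0 \<in> carrier_vec (Suc n)" "v0 \<noteq> 0\<^sub>v (Suc n)"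
    "M *\<^sub>v v0 = e \<cdot>\<^sub>v v0" by auto
  define v where "v = (1 / sqrt (v0 \<bullet> v0)) \<cdot>\<^sub>v v0"
  have p: "v0 \<bullet> v0 > 0" using sprod_self_gt0[OF v0(1,2)] .
  have v: "v \<in> carrier_vec (Suc n)" unfolding v_def using v0 by auto
  have v1: "v \<bullet> v = 1" unfolding v_def using v0(1) p by (simp add: real_sqrt_mult[symmetric])
  have Mv: "M *\<^sub>v v = e \<cdot>\<^sub>v v" unfolding v_def using v0 M
    by (simp add: mult_mat_vec[of _ "Suc n" "Suc n"] smult_smult_assoc mult.commute)
  from orth_completion[OF v v1] obtain W where W: "W \<in> carrier_mat (Suc n) (Suc n)"
    and WW: "transpose_mat W * W = 1\<^sub>m (Suc n)" and WW': "W * transpose_mat W = 1\<^sub>m (Suc n)"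
    and W0: "col W 0 = v" by auto
  define A' where "A' = transpose_mat W * M * W"
  have A': "A' \<in> carrier_mat (Suc n) (Suc n)" unfolding A'_def using W M by auto
  have A'e: "A' $$ (i,j) = col W i \<bullet> (M *\<^sub>v col W j)" if "i < Suc n" "j < Suc n" for i j
    unfolding A'_def by (rule quad_entry[OF M W that])
  have colsp: "col W i \<bullet> col W j = (if i = j then 1 else 0)" if "i < Suc n" "j < Suc n" for i j
  proof -
    have "(transpose_mat W * W) $$ (i,j) = col W i \<bullet> col W j" using W that by simp
    thus ?thesis unfolding WW using that by simp
  qed
  have A'sym: "A' $$ (i,j) = A' $$ (j,i)" if "i < Suc n" "j < Suc n" for i j
  proof -
    have ci: "col W i \<in> carrier_vec (Suc n)" and cj: "col W j \<in> carrier_vec (Suc n)" using W that by auto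
    have mi: "M *\<^sub>v col W i \<in> carrier_vec (Suc n)" using M ci by auto
    show ?thesis unfolding A'e[OF that] A'e[OF that(2,1)] sym_sprod[OF M sym ci cj]
      by (rule comm_scalar_prod[OF mi cj])
  qed
  have A'0: "A' $$ (i,0) = (if i = 0 then e else 0)" if "i < Suc n" for i
  proof -
    have "A' $$ (i,0) = col W i \<bullet> (e \<cdot>\<^sub>v col W 0)" unfolding A'e[OF that zero_less_Suc] W0 Mv by simp
    also have "\<dots> = e * (col W i \<bullet> col W 0)" using W that by simp
    finally show ?thesis using colsp[OF that zero_less_Suc] by simp
  qed
  define A3 where "A3 = mat n n (\<lambda>(i,j). A' $$ (Suc i, Suc j))"
  have A3: "A3 \<in> carrier_mat n n" unfolding A3_def by simp
  have A3sym: "transpose_mat A3 = A3" unfolding A3_def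
    by (rule eq_matI, auto intro: A'sym)
  from Suc(1)[OF A3 A3sym] obtain U3 D3 where U3: "U3 \<in> carrier_mat n n" and D3: "D3 \<in> carrier_mat n n"
    and dD3: "diagonal_mat D3" and UU3: "transpose_mat U3 * U3 = 1\<^sub>m n"
    and UU3': "U3 * transpose_mat U3 = 1\<^sub>m n" and A3eq: "A3 = U3 * D3 * transpose_mat U3" by auto
  define E where "E = mat 1 1 (\<lambda>_. e)"
  have E: "E \<in> carrier_mat 1 1" unfolding E_def by simp
  define B where "B = four_block_mat (1\<^sub>m 1) (0\<^sub>m 1 n) (0\<^sub>m n 1) U3"
  define D where "D = four_block_mat E (0\<^sub>m 1 n) (0\<^sub>m n 1) D3"
  have B: "B \<in> carrier_mat (Suc n) (Suc n)" unfolding B_def using U3 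
    using four_block_carrier_mat[of "1\<^sub>m 1" 1 1 U3 n n] by simp
  have D: "D \<in> carrier_mat (Suc n) (Suc n)" unfolding D_def using D3 E
    using four_block_carrier_mat[of E 1 1 D3 n n] by simp
  have BT: "transpose_mat B = four_block_mat (1\<^sub>m 1) (0\<^sub>m 1 n) (0\<^sub>m n 1) (transpose_mat U3)"
    unfolding B_def by (subst transpose_four_block_mat[of _ 1 1 _ n _ n], insert U3, auto)
  have BB: "transpose_mat B * B = 1\<^sub>m (Suc n)"
    unfolding BT unfolding B_def
    by (subst mult_four_block_mat[of _ 1 1 _ n _ n _ _ 1 _ n], insert U3 UU3, auto)
  have BB': "B * transpose_mat B = 1\<^sub>m (Suc n)"
    unfolding BT unfolding B_def
    by (subst mult_four_block_mat[of _ 1 1 _ n _ n _ _ 1 _ n], insert U3 UU3', auto)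
  have BDB: "B * D * transpose_mat B = four_block_mat E (0\<^sub>m 1 n) (0\<^sub>m n 1) A3"
    unfolding BT unfolding B_def D_def A3eq
    apply (subst mult_four_block_mat[of _ 1 1 _ n _ n _ _ 1 _ n], insert U3 D3 E, auto)
    apply (subst mult_four_block_mat[of _ 1 1 _ n _ n _ _ 1 _ n], insert U3 D3 E, auto)
    done
  have A'blk: "A' = four_block_mat E (0\<^sub>m 1 n) (0\<^sub>m n 1) A3"
  proof (rule eq_matI)
    fix i j assume i: "i < dim_row (four_block_mat E (0\<^sub>m 1 n) (0\<^sub>m n 1) A3)"
      and j: "j < dim_col (four_block_mat E (0\<^sub>m 1 n) (0\<^sub>m n 1) A3)"
    hence i: "i < Suc n" and j: "j < Suc n" using E A3 by auto
    show "A' $$ (i,j) = four_block_mat E (0\<^sub>m 1 n) (0\<^sub>m n 1) A3 $$ (i,j)"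
    proof (cases "i = 0")
      case True
      thus ?thesis using A'0[OF j] A'sym[OF i j] E A3 i j by (auto simp: E_def)
    next
      case False
      show ?thesis
      proof (cases "j = 0")
        case True thus ?thesis using A'0[OF i] E A3 i j False by (auto simp: E_def)
      next
        case False
        then obtain i' j' where "i = Suc i'" "j = Suc j'" using \<open>i \<noteq> 0\<close> by (cases i; cases j; auto)
        thus ?thesis using E A3 i j by (auto simp: A3_def)
      qed
    qed
  qed (insert A' E A3, auto)
  define U where "U = W * B"
  have U: "U \<in> carrier_mat (Suc n) (Suc n)" unfolding U_def using W B by auto
  have UT: "transpose_mat U = transpose_mat B * transpose_mat W" unfolding U_def
    by (rule transpose_mult[OF W B])
  have WT: "transpose_mat W \<in> carrier_mat (Suc n) (Suc n)" and BTc: "transpose_mat B \<in> carrier_mat (Suc n) (Suc n)"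
    using W B by auto
  note as = assoc_mult_mat[of _ "Suc n" "Suc n" _ "Suc n" _ "Suc n"]
  have "transpose_mat U * U = transpose_mat B * (transpose_mat W * W) * B"
    unfolding UT unfolding U_def using W B WT BTc by (simp add: as)
  hence UU: "transpose_mat U * U = 1\<^sub>m (Suc n)" unfolding WW using B BB by simp
  have "U * transpose_mat U = W * (B * transpose_mat B) * transpose_mat W"
    unfolding UT unfolding U_def using W B WT BTc by (simp add: as)
  hence UU': "U * transpose_mat U = 1\<^sub>m (Suc n)" unfolding BB' using W WW' by simp
  have "U * D * transpose_mat U = W * (B * D * transpose_mat B) * transpose_mat W"
    unfolding UT unfolding U_def using W B D WT BTc by (simp add: as)
  also have "\<dots> = W * A' * transpose_mat W" unfolding BDB A'blk ..
  also have "\<dots> = (W * transpose_mat W) * M * (W * transpose_mat W)"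
    unfolding A'_def using W M WT by (simp add: as)
  also have "\<dots> = M" unfolding WW' using M by simp
  finally have MUD: "M = U * D * transpose_mat U" ..
  have dD: "diagonal_mat D" unfolding diagonal_mat_def
  proof (intro allI impI)
    fix i j assume i: "i < dim_row D" and j: "j < dim_col D" and ij: "i \<noteq> j"
    hence i: "i < Suc n" and j: "j < Suc n" using D by auto
    show "D $$ (i,j) = 0" unfolding D_def using i j ij E D3 dD3
      by (auto simp: diagonal_mat_def)
  qed
  show ?case using U D dD UU UU' MUD by blast
qed

lemma sprod_sum_sq: "(y::real vec) \<bullet> y = (\<Sum>i = 0..<dim_vec y. (y $ i)^2)"
  unfolding scalar_prod_def by (simp add: power2_eq_square)

lemma diag_mult_vec:
  fixes D :: "real mat"
  assumes D: "D \<in> carrier_mat n n" and dD: "diagonal_mat D" and y: "y \<in> carrier_vec n" and i: "i < n"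
  shows "(D *\<^sub>v y) $ i = D $$ (i,i) * y $ i"
proof -
  have "(D *\<^sub>v y) $ i = (\<Sum>j = 0..<n. D $$ (i,j) * y $ j)" by (rule mult_mat_vec_index_sum[OF D y i])
  also have "\<dots> = (\<Sum>j \<in> {i}. D $$ (i,j) * y $ j)"
    by (rule sum.mono_neutral_right, insert i D dD, auto simp: diagonal_mat_def)
  finally show ?thesis by simp
qed

lemma quad_UDU:
  fixes U D :: "real mat"
  assumes U: "U \<in> carrier_mat n n" and D: "D \<in> carrier_mat n n" and dD: "diagonal_mat D"
    and x: "x \<in> carrier_vec n"
  shows "x \<bullet> ((U * D * transpose_mat U) *\<^sub>v x) = (\<Sum>i = 0..<n. D $$ (i,i) * ((transpose_mat U *\<^sub>v x) $ i)^2)"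
proof -
  define y where "y = transpose_mat U *\<^sub>v x"
  have y: "y \<in> carrier_vec n" unfolding y_def using U x by auto
  have "(U * D * transpose_mat U) *\<^sub>v x = U *\<^sub>v (D *\<^sub>v y)" unfolding y_def using U D x
    by (simp add: assoc_mult_mat_vec[of _ n n _ n])
  hence "x \<bullet> ((U * D * transpose_mat U) *\<^sub>v x) = y \<bullet> (D *\<^sub>v y)"
    using transpose_vec_mult_scalar[OF U _ x, of "D *\<^sub>v y"] D y unfolding y_def by auto
  also have "\<dots> = (\<Sum>i = 0..<n. y $ i * (D *\<^sub>v y) $ i)" unfolding scalar_prod_def using D by simp
  also have "\<dots> = (\<Sum>i = 0..<n. D $$ (i,i) * (y $ i)^2)"
    by (rule sum.cong, insert diag_mult_vec[OF D dD y], auto simp: power2_eq_square)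
  finally show ?thesis unfolding y_def .
qed

lemma norm_UT:
  fixes U :: "real mat"
  assumes U: "U \<in> carrier_mat n n" and UU': "U * transpose_mat U = 1\<^sub>m n" and x: "x \<in> carrier_vec n"
  shows "(transpose_mat U *\<^sub>v x) \<bullet> (transpose_mat U *\<^sub>v x) = x \<bullet> x"
proof -
  have "(transpose_mat U *\<^sub>v x) \<bullet> (transpose_mat U *\<^sub>v x) = x \<bullet> (U *\<^sub>v (transpose_mat U *\<^sub>v x))"
    by (rule transpose_vec_mult_scalar[OF U _ x], insert U x, auto)
  also have "U *\<^sub>v (transpose_mat U *\<^sub>v x) = (U * transpose_mat U) *\<^sub>v x"
    by (rule assoc_mult_mat_vec[symmetric], insert U x, auto)
  also have "\<dots> = x" unfolding UU' using x by simp
  finally show ?thesis .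
qed

lemma spectral_eigs:
  fixes M U D :: "real mat"
  assumes U: "U \<in> carrier_mat n n" and D: "D \<in> carrier_mat n n" and dD: "diagonal_mat D"
    and UU: "transpose_mat U * U = 1\<^sub>m n" and UU': "U * transpose_mat U = 1\<^sub>m n"
    and MU: "M = U * D * transpose_mat U"
  shows "{e. eigenvalue M e} = (\<lambda>i. D $$ (i,i)) ` {0..<n}"
proof -
  have M: "M \<in> carrier_mat n n" unfolding MU using U D by auto
  have UT: "transpose_mat U \<in> carrier_mat n n" using U by auto
  {
    fix i assume i: "i < n"
    define v where "v = col U i"
    have v: "v \<in> carrier_vec n" unfolding v_def using U by auto
    have "v \<bullet> v = (transpose_mat U * U) $$ (i,i)" unfolding v_def using U i by simp
    hence vv: "v \<bullet> v = 1" unfolding UU using i by simp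
    hence v0: "v \<noteq> 0\<^sub>v n" using v by auto
    have "transpose_mat U *\<^sub>v v = col (transpose_mat U * U) i" unfolding v_def
      by (rule col_mult2[symmetric], insert U i, auto)
    also have "\<dots> = unit_vec n i" unfolding UU using i by simp
    finally have Utv: "transpose_mat U *\<^sub>v v = unit_vec n i" .
    have Du: "D *\<^sub>v unit_vec n i = D $$ (i,i) \<cdot>\<^sub>v unit_vec n i"
    proof (rule eq_vecI)
      fix j assume "j < dim_vec (D $$ (i,i) \<cdot>\<^sub>v unit_vec n i)"
      hence j: "j < n" by simp
      have "(D *\<^sub>v unit_vec n i) $ j = D $$ (j,j) * unit_vec n i $ j"
        by (rule diag_mult_vec[OF D dD _ j], simp)
      thus "(D *\<^sub>v unit_vec n i) $ j = (D $$ (i,i) \<cdot>\<^sub>v unit_vec n i) $ j"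
        using i j by (cases "i = j", auto)
    qed (insert D, auto)
    have "M *\<^sub>v v = U *\<^sub>v (D *\<^sub>v (transpose_mat U *\<^sub>v v))" unfolding MU using U D v
      by (simp add: assoc_mult_mat_vec[of _ n n _ n])
    also have "\<dots> = D $$ (i,i) \<cdot>\<^sub>v (U *\<^sub>v unit_vec n i)" unfolding Utv Du using U by (simp add: mult_mat_vec[of _ n n])
    also have "U *\<^sub>v unit_vec n i = v" unfolding v_def using U i by (intro eq_vecI, auto)
    finally have Mv: "M *\<^sub>v v = D $$ (i,i) \<cdot>\<^sub>v v" .
    have "eigenvector M v (D $$ (i,i))" unfolding eigenvector_def using v v0 M Mv by simp
    hence "eigenvalue M (D $$ (i,i))" unfolding eigenvalue_def by blast
  }
  moreover
  {
    fix e assume "eigenvalue M e"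
    then obtain v where v: "v \<in> carrier_vec n" "v \<noteq> 0\<^sub>v n" "M *\<^sub>v v = e \<cdot>\<^sub>v v"
      unfolding eigenvalue_def eigenvector_def using M by auto
    define y where "y = transpose_mat U *\<^sub>v v"
    have y: "y \<in> carrier_vec n" unfolding y_def using U v by auto
    have "U *\<^sub>v y = (U * transpose_mat U) *\<^sub>v v" unfolding y_def
      by (rule assoc_mult_mat_vec[symmetric], insert U v, auto)
    hence "U *\<^sub>v y = v" unfolding UU' using v by simp
    hence y0: "y \<noteq> 0\<^sub>v n" using v(2) U by auto
    have "D *\<^sub>v y = transpose_mat U *\<^sub>v (M *\<^sub>v v)"
    proof -
      have "transpose_mat U *\<^sub>v (M *\<^sub>v v) = (transpose_mat U * M) *\<^sub>v v"
        using U M v by (simp add: assoc_mult_mat_vec[of _ n n _ n])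
      also have "transpose_mat U * M = (transpose_mat U * U) * D * transpose_mat U"
        unfolding MU using U D UT by (simp add: assoc_mult_mat[of _ n n _ n _ n])
      also have "\<dots> = D * transpose_mat U" unfolding UU using D by simp
      finally show ?thesis unfolding y_def using D U v by (simp add: assoc_mult_mat_vec[of _ n n _ n])
    qed
    also have "\<dots> = e \<cdot>\<^sub>v y" unfolding v(3) y_def using U v by (simp add: mult_mat_vec[of _ n n])
    finally have Dy: "D *\<^sub>v y = e \<cdot>\<^sub>v y" .
    have "\<exists>i<n. y $ i \<noteq> 0"
    proof (rule ccontr)
      assume "\<not> ?thesis"
      hence "y = 0\<^sub>v n" by (intro eq_vecI, insert y, auto)
      with y0 show False by simp
    qed
    then obtain i where i: "i < n" and yi: "y $ i \<noteq> 0" by auto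
    from arg_cong[OF Dy, of "\<lambda>w. w $ i"] diag_mult_vec[OF D dD y i] i y
    have "D $$ (i,i) * y $ i = e * y $ i" by simp
    hence "e = D $$ (i,i)" using yi by simp
    hence "e \<in> (\<lambda>i. D $$ (i,i)) ` {0..<n}" using i by auto
  }
  ultimately show ?thesis by auto
qed

lemma sym_facts:
  fixes M :: "real mat"
  assumes M: "M \<in> carrier_mat n n" and sym: "transpose_mat M = M" and n: "n > 0"
  shows "finite {e. eigenvalue M e}" "{e. eigenvalue M e} \<noteq> {}"
    "eigenvalue M (lambda_min M)" "eigenvalue M (lambda_max M)"
    "\<And>x. x \<in> carrier_vec n \<Longrightarrow> lambda_min M * (x \<bullet> x) \<le> x \<bullet> (M *\<^sub>v x)"
    "\<And>x. x \<in> carrier_vec n \<Longrightarrow> x \<bullet> (M *\<^sub>v x) \<le> lambda_max M * (x \<bullet> x)"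
proof -
  from spectral[OF M sym] obtain U D where U: "U \<in> carrier_mat n n" and D: "D \<in> carrier_mat n n"
    and dD: "diagonal_mat D" and UU: "transpose_mat U * U = 1\<^sub>m n" and UU': "U * transpose_mat U = 1\<^sub>m n"
    and MU: "M = U * D * transpose_mat U" by auto
  note E = spectral_eigs[OF U D dD UU UU' MU]
  show fin: "finite {e. eigenvalue M e}" unfolding E by simp
  show ne: "{e. eigenvalue M e} \<noteq> {}" unfolding E using n by auto
  show "eigenvalue M (lambda_min M)" unfolding lambda_min_def using Min_in[OF fin ne] by simp
  show "eigenvalue M (lambda_max M)" unfolding lambda_max_def using Max_in[OF fin ne] by simp
  have lo: "lambda_min M \<le> D $$ (i,i)" if "i < n" for i
    unfolding lambda_min_def using E fin that by (intro Min_le, auto)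
  have hi: "D $$ (i,i) \<le> lambda_max M" if "i < n" for i
    unfolding lambda_max_def using E fin that by (intro Max_ge, auto)
  have bnds: "lambda_min M * (x \<bullet> x) \<le> x \<bullet> (M *\<^sub>v x) \<and> x \<bullet> (M *\<^sub>v x) \<le> lambda_max M * (x \<bullet> x)"
    if x: "x \<in> carrier_vec n" for x
  proof -
    define y where "y = transpose_mat U *\<^sub>v x"
    have y: "y \<in> carrier_vec n" unfolding y_def using U x by auto
    have q: "x \<bullet> (M *\<^sub>v x) = (\<Sum>i = 0..<n. D $$ (i,i) * (y $ i)^2)" unfolding MU y_def
      by (rule quad_UDU[OF U D dD x])
    have yy: "y \<bullet> y = x \<bullet> x" using norm_UT[OF U UU' x] unfolding y_def .
    have dy: "dim_vec y = n" using y by auto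
    have nx: "x \<bullet> x = (\<Sum>i = 0..<n. (y $ i)^2)" using sprod_sum_sq[of y] unfolding yy dy .
    have 1: "lambda_min M * (x \<bullet> x) \<le> x \<bullet> (M *\<^sub>v x)" unfolding q nx sum_distrib_left
      by (rule sum_mono, rule mult_right_mono, insert lo, auto)
    have 2: "x \<bullet> (M *\<^sub>v x) \<le> lambda_max M * (x \<bullet> x)" unfolding q nx sum_distrib_left
      by (rule sum_mono, rule mult_right_mono, insert hi, auto)
    from 1 2 show ?thesis ..
  qed
  show "\<And>x. x \<in> carrier_vec n \<Longrightarrow> lambda_min M * (x \<bullet> x) \<le> x \<bullet> (M *\<^sub>v x)" using bnds by blast
  show "\<And>x. x \<in> carrier_vec n \<Longrightarrow> x \<bullet> (M *\<^sub>v x) \<le> lambda_max M * (x \<bullet> x)" using bnds by blast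
qed

lemma eig_quad:
  fixes M :: "real mat"
  assumes M: "M \<in> carrier_mat n n" and ev: "eigenvalue M e"
  obtains v where "v \<in> carrier_vec n" "v \<bullet> v > 0" "v \<bullet> (M *\<^sub>v v) = e * (v \<bullet> v)"
proof -
  from ev obtain v where v: "v \<in> carrier_vec n" "v \<noteq> 0\<^sub>v n" "M *\<^sub>v v = e \<cdot>\<^sub>v v"
    unfolding eigenvalue_def eigenvector_def using M by auto
  show ?thesis by (rule that[OF v(1) sprod_self_gt0[OF v(1,2)]], insert v, simp)
qed

lemma lambda_min_ge:
  fixes M :: "real mat"
  assumes M: "M \<in> carrier_mat n n" and sym: "transpose_mat M = M" and n: "n > 0"
    and bound: "\<And>x. x \<in> carrier_vec n \<Longrightarrow> c * (x \<bullet> x) \<le> x \<bullet> (M *\<^sub>v x)"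
  shows "c \<le> lambda_min M"
proof -
  obtain v where v: "v \<in> carrier_vec n" "v \<bullet> v > 0" "v \<bullet> (M *\<^sub>v v) = lambda_min M * (v \<bullet> v)"
    using eig_quad[OF M sym_facts(3)[OF M sym n]] by blast
  from bound[OF v(1)] v(2,3) show ?thesis by simp
qed

lemma lambda_max_le:
  fixes M :: "real mat"
  assumes M: "M \<in> carrier_mat n n" and sym: "transpose_mat M = M" and n: "n > 0"
    and bound: "\<And>x. x \<in> carrier_vec n \<Longrightarrow> x \<bullet> (M *\<^sub>v x) \<le> c * (x \<bullet> x)"
  shows "lambda_max M \<le> c"
proof -
  obtain v where v: "v \<in> carrier_vec n" "v \<bullet> v > 0" "v \<bullet> (M *\<^sub>v v) = lambda_max M * (v \<bullet> v)"
    using eig_quad[OF M sym_facts(4)[OF M sym n]] by blast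
  from bound[OF v(1)] v(2,3) show ?thesis by simp
qed

lemma eig_bounds:
  fixes M :: "real mat"
  assumes M: "M \<in> carrier_mat n n" and sym: "transpose_mat M = M" and n: "n > 0" and ev: "eigenvalue M e"
  shows "lambda_min M \<le> e" "e \<le> lambda_max M"
  using sym_facts(1)[OF M sym n] ev unfolding lambda_min_def lambda_max_def
  by (auto intro: Min_le Max_ge)

lemma psd_eig_nonneg:
  fixes M :: "real mat"
  assumes psd: "positive_semidefinite n M" and ev: "eigenvalue M e"
  shows "e \<ge> 0"
proof -
  have M: "M \<in> carrier_mat n n" using psd unfolding positive_semidefinite_def by auto
  obtain v where v: "v \<in> carrier_vec n" "v \<bullet> v > 0" "v \<bullet> (M *\<^sub>v v) = e * (v \<bullet> v)"
    using eig_quad[OF M ev] by blast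
  have "v \<bullet> (M *\<^sub>v v) \<ge> 0" using psd v(1) unfolding positive_semidefinite_def by auto
  with v(2,3) show ?thesis by (simp add: zero_le_mult_iff)
qed

lemma diag_sqrt_sq:
  fixes D :: "real mat"
  assumes D: "D \<in> carrier_mat n n" and dD: "diagonal_mat D" and nn: "\<And>i. i < n \<Longrightarrow> D $$ (i,i) \<ge> 0"
  defines "Q \<equiv> mat n n (\<lambda>(i,j). if i = j then sqrt (D $$ (i,i)) else 0)"
  shows "Q * Q = D" "diagonal_mat Q" "Q \<in> carrier_mat n n" "transpose_mat Q = Q"
    "\<And>i. i < n \<Longrightarrow> Q $$ (i,i) \<ge> 0"
proof -
  show Q: "Q \<in> carrier_mat n n" unfolding Q_def by simp
  show "diagonal_mat Q" unfolding Q_def diagonal_mat_def by simp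
  show "transpose_mat Q = Q" unfolding Q_def by (rule eq_matI, auto)
  show "\<And>i. i < n \<Longrightarrow> Q $$ (i,i) \<ge> 0" unfolding Q_def using nn by simp
  show "Q * Q = D"
  proof (rule eq_matI)
    fix i j assume i: "i < dim_row D" and j: "j < dim_col D"
    hence i: "i < n" and j: "j < n" using D by auto
    have "(Q * Q) $$ (i,j) = (\<Sum>k = 0..<n. Q $$ (i,k) * Q $$ (k,j))"
      using Q i j by (simp add: scalar_prod_def)
    also have "\<dots> = (\<Sum>k \<in> {i}. Q $$ (i,k) * Q $$ (k,j))"
      by (rule sum.mono_neutral_right, insert i j, auto simp: Q_def)
    also have "\<dots> = D $$ (i,j)" using i j nn[OF i] D dD
      by (auto simp: Q_def diagonal_mat_def)
    finally show "(Q * Q) $$ (i,j) = D $$ (i,j)" .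
  qed (insert Q D, auto)
qed

lemma psd_exists:
  fixes M :: "real mat"
  assumes psd: "positive_semidefinite n M"
  shows "\<exists>S. positive_semidefinite n S \<and> S * S = M"
proof -
  have M: "M \<in> carrier_mat n n" and sym: "transpose_mat M = M" using psd unfolding positive_semidefinite_def by auto
  from spectral[OF M sym] obtain U D where U: "U \<in> carrier_mat n n" and D: "D \<in> carrier_mat n n"
    and dD: "diagonal_mat D" and UU: "transpose_mat U * U = 1\<^sub>m n" and UU': "U * transpose_mat U = 1\<^sub>m n"
    and MU: "M = U * D * transpose_mat U" by auto
  note E = spectral_eigs[OF U D dD UU UU' MU]
  have nn: "D $$ (i,i) \<ge> 0" if "i < n" for i
    by (rule psd_eig_nonneg[OF psd], insert E that, auto)
  define Q where "Q = mat n n (\<lambda>(i,j). if i = j then sqrt (D $$ (i,i)) else 0)"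
  note Qp = diag_sqrt_sq[OF D dD nn, folded Q_def]
  have Q: "Q \<in> carrier_mat n n" by (rule Qp(3))
  define S where "S = U * Q * transpose_mat U"
  have UT: "transpose_mat U \<in> carrier_mat n n" using U by auto
  have S: "S \<in> carrier_mat n n" unfolding S_def using U Q by auto
  note as = assoc_mult_mat[of _ n n _ n _ n]
  have "transpose_mat S = transpose_mat (transpose_mat U) * transpose_mat (U * Q)"
    unfolding S_def by (rule transpose_mult[of _ n n], insert U Q, auto)
  also have "transpose_mat (U * Q) = transpose_mat Q * transpose_mat U" by (rule transpose_mult[OF U Q])
  finally have "transpose_mat S = U * (transpose_mat Q * transpose_mat U)" by simp
  hence "transpose_mat S = U * (Q * transpose_mat U)" by (simp add: Qp(4))
  hence Ssym: "transpose_mat S = S" unfolding S_def using U Q UT by (simp add: as)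
  have Spsd: "x \<bullet> (S *\<^sub>v x) \<ge> 0" if x: "x \<in> carrier_vec n" for x
  proof -
    have eq: "x \<bullet> (S *\<^sub>v x) = (\<Sum>i = 0..<n. Q $$ (i,i) * ((transpose_mat U *\<^sub>v x) $ i)^2)"
      unfolding S_def by (rule quad_UDU[OF U Q Qp(2) x])
    show ?thesis unfolding eq by (rule sum_nonneg, insert Qp(5), auto)
  qed
  have "S * S = U * (Q * Q) * transpose_mat U"
  proof -
    have "S * S = U * (Q * ((transpose_mat U * U) * (Q * transpose_mat U)))"
      unfolding S_def using U Q UT by (simp add: as)
    also have "\<dots> = U * (Q * Q) * transpose_mat U" unfolding UU using U Q UT by (simp add: as)
    finally show ?thesis .
  qed
  hence "S * S = U * D * transpose_mat U" by (simp only: Qp(1))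
  hence "S * S = M" unfolding MU .
  moreover have "positive_semidefinite n S" unfolding positive_semidefinite_def using S Ssym Spsd by auto
  ultimately show ?thesis by blast
qed

lemma psd_kernel:
  fixes S :: "real mat"
  assumes psd: "positive_semidefinite n S" and x: "x \<in> carrier_vec n" and q: "x \<bullet> (S *\<^sub>v x) = 0"
  shows "S *\<^sub>v x = 0\<^sub>v n"
proof -
  have M: "S \<in> carrier_mat n n" and sym: "transpose_mat S = S" using psd unfolding positive_semidefinite_def by auto
  from spectral[OF M sym] obtain U D where U: "U \<in> carrier_mat n n" and D: "D \<in> carrier_mat n n"
    and dD: "diagonal_mat D" and UU: "transpose_mat U * U = 1\<^sub>m n" and UU': "U * transpose_mat U = 1\<^sub>m n"
    and MU: "S = U * D * transpose_mat U" by auto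
  note E = spectral_eigs[OF U D dD UU UU' MU]
  have nn: "D $$ (i,i) \<ge> 0" if "i < n" for i
    by (rule psd_eig_nonneg[OF psd], insert E that, auto)
  define y where "y = transpose_mat U *\<^sub>v x"
  have y: "y \<in> carrier_vec n" unfolding y_def using U x by auto
  have "(\<Sum>i = 0..<n. D $$ (i,i) * (y $ i)^2) = 0"
    using q quad_UDU[OF U D dD x] unfolding MU y_def by simp
  hence z: "D $$ (i,i) * (y $ i)^2 = 0" if "i < n" for i
    using sum_nonneg_eq_0_iff[of "{0..<n}" "\<lambda>i. D $$ (i,i) * (y $ i)^2"] nn that by auto
  have Dy: "D *\<^sub>v y = 0\<^sub>v n"
  proof (rule eq_vecI)
    fix i assume "i < dim_vec (0\<^sub>v n :: real vec)"
    hence i: "i < n" by simp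
    show "(D *\<^sub>v y) $ i = 0\<^sub>v n $ i" unfolding diag_mult_vec[OF D dD y i] using z[OF i] i by auto
  qed (insert D, auto)
  have "S *\<^sub>v x = U *\<^sub>v (D *\<^sub>v y)" unfolding MU y_def using U D x
    by (simp add: assoc_mult_mat_vec[of _ n n _ n])
  moreover have "U *\<^sub>v 0\<^sub>v n = 0\<^sub>v n" using U by (intro eq_vecI, auto)
  ultimately show ?thesis unfolding Dy by simp
qed

lemma sym_all_eig_zero:
  fixes M :: "real mat"
  assumes M: "M \<in> carrier_mat n n" and sym: "transpose_mat M = M"
    and ev: "\<And>e. eigenvalue M e \<Longrightarrow> e = 0"
  shows "M = 0\<^sub>m n n"
proof -
  from spectral[OF M sym] obtain U D where U: "U \<in> carrier_mat n n" and D: "D \<in> carrier_mat n n"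
    and dD: "diagonal_mat D" and UU: "transpose_mat U * U = 1\<^sub>m n" and UU': "U * transpose_mat U = 1\<^sub>m n"
    and MU: "M = U * D * transpose_mat U" by auto
  note E = spectral_eigs[OF U D dD UU UU' MU]
  have "D = 0\<^sub>m n n"
  proof (rule eq_matI)
    fix i j assume "i < dim_row (0\<^sub>m n n :: real mat)" "j < dim_col (0\<^sub>m n n :: real mat)"
    hence i: "i < n" and j: "j < n" by auto
    show "D $$ (i,j) = 0\<^sub>m n n $$ (i,j)"
    proof (cases "i = j")
      case True
      have "eigenvalue M (D $$ (i,i))" using E i by auto
      thus ?thesis using ev True i by auto
    next
      case False thus ?thesis using dD D i j unfolding diagonal_mat_def by auto
    qed
  qed (insert D, auto)
  thus ?thesis unfolding MU using U by simp
qed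

lemma psd_unique:
  fixes S T :: "real mat"
  assumes S: "positive_semidefinite n S" and T: "positive_semidefinite n T" and ST: "S * S = T * T"
  shows "S = T"
proof -
  have Sc: "S \<in> carrier_mat n n" and Ss: "transpose_mat S = S" and Sp: "\<And>x. x \<in> carrier_vec n \<Longrightarrow> x \<bullet> (S *\<^sub>v x) \<ge> 0"
    using S unfolding positive_semidefinite_def by auto
  have Tc: "T \<in> carrier_mat n n" and Ts: "transpose_mat T = T" and Tp: "\<And>x. x \<in> carrier_vec n \<Longrightarrow> x \<bullet> (T *\<^sub>v x) \<ge> 0"
    using T unfolding positive_semidefinite_def by auto
  define Dm where "Dm = S - T"
  have Dc: "Dm \<in> carrier_mat n n" unfolding Dm_def using Sc Tc by auto
  have Ds: "transpose_mat Dm = Dm" unfolding Dm_def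
  proof (rule eq_matI)
    fix i j assume "i < dim_row (S - T)" "j < dim_col (S - T)"
    hence i: "i < n" and j: "j < n" using Tc by auto
    have "S $$ (j,i) = S $$ (i,j)" using arg_cong[OF Ss, of "\<lambda>A. A $$ (i,j)"] Sc i j by simp
    moreover have "T $$ (j,i) = T $$ (i,j)" using arg_cong[OF Ts, of "\<lambda>A. A $$ (i,j)"] Tc i j by simp
    ultimately show "transpose_mat (S - T) $$ (i,j) = (S - T) $$ (i,j)" using Sc Tc i j by simp
  qed (insert Sc Tc, auto simp: Dm_def)
  have "Dm = 0\<^sub>m n n"
  proof (rule sym_all_eig_zero[OF Dc Ds])
    fix mu assume "eigenvalue Dm mu"
    then obtain w where w: "w \<in> carrier_vec n" "w \<noteq> 0\<^sub>v n" "Dm *\<^sub>v w = mu \<cdot>\<^sub>v w"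
      unfolding eigenvalue_def eigenvector_def using Dc by auto
    define sw where "sw = S *\<^sub>v w"
    define tw where "tw = T *\<^sub>v w"
    have sw: "sw \<in> carrier_vec n" and tw: "tw \<in> carrier_vec n" unfolding sw_def tw_def using Sc Tc w by auto
    have Dw: "Dm *\<^sub>v w = sw - tw" unfolding Dm_def sw_def tw_def
      by (rule minus_mult_distrib_mat_vec[OF Sc Tc w(1)])
    have e1: "w \<bullet> (S *\<^sub>v sw) = sw \<bullet> sw" using sym_sprod[OF Sc Ss w(1) sw] by (simp add: sw_def)
    have e2: "w \<bullet> (S *\<^sub>v tw) = sw \<bullet> tw" using sym_sprod[OF Sc Ss w(1) tw] by (simp add: sw_def)
    have e3: "tw \<bullet> tw = sw \<bullet> sw"
    proof -
      have "tw \<bullet> tw = w \<bullet> (T *\<^sub>v tw)" using sym_sprod[OF Tc Ts w(1) tw] by (simp add: tw_def)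
      also have "T *\<^sub>v tw = (T * T) *\<^sub>v w" unfolding tw_def using Tc w by simp
      also have "\<dots> = (S * S) *\<^sub>v w" unfolding ST ..
      also have "\<dots> = S *\<^sub>v sw" unfolding sw_def using Sc w by simp
      finally show ?thesis using e1 by simp
    qed
    have e4: "tw \<bullet> sw = sw \<bullet> tw" by (rule comm_scalar_prod[OF tw sw])
    have "w \<bullet> (S *\<^sub>v (Dm *\<^sub>v w)) + (Dm *\<^sub>v w) \<bullet> tw = 0"
      unfolding Dw using Sc w sw tw
      by (simp add: mult_minus_distrib_mat_vec[OF Sc sw tw] scalar_prod_minus_distrib[of _ n]
          minus_scalar_prod_distrib[of _ n] e1 e2 e3 e4)
    also have "w \<bullet> (S *\<^sub>v (Dm *\<^sub>v w)) + (Dm *\<^sub>v w) \<bullet> tw = mu * (w \<bullet> sw + w \<bullet> tw)"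
      unfolding w(3) sw_def tw_def using Sc Tc w by (simp add: mult_mat_vec[of _ n n] algebra_simps)
    finally have z: "mu * (w \<bullet> sw + w \<bullet> tw) = 0" .
    show "mu = 0"
    proof (rule ccontr)
      assume mu: "mu \<noteq> 0"
      with z have "w \<bullet> sw + w \<bullet> tw = 0" by simp
      moreover have "w \<bullet> sw \<ge> 0" "w \<bullet> tw \<ge> 0" unfolding sw_def tw_def using Sp Tp w by auto
      ultimately have "w \<bullet> sw = 0" "w \<bullet> tw = 0" by auto
      hence "sw = 0\<^sub>v n" "tw = 0\<^sub>v n" unfolding sw_def tw_def
        using psd_kernel[OF S w(1)] psd_kernel[OF T w(1)] by auto
      hence "mu \<cdot>\<^sub>v w = 0\<^sub>v n" using w(3) Dw by auto
      hence "(mu \<cdot>\<^sub>v w) \<bullet> w = 0" using w(1) by simp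
      hence "mu * (w \<bullet> w) = 0" using w(1) by simp
      with mu sprod_self_gt0[OF w(1,2)] show False by simp
    qed
  qed
  show ?thesis
  proof (rule eq_matI)
    fix i j assume "i < dim_row T" "j < dim_col T"
    hence i: "i < n" and j: "j < n" using Tc by auto
    have "Dm $$ (i,j) = 0" unfolding \<open>Dm = 0\<^sub>m n n\<close> using i j by simp
    thus "S $$ (i,j) = T $$ (i,j)" unfolding Dm_def using Sc Tc i j by simp
  qed (insert Sc Tc, auto)
qed

lemma psd_sqrt_props:
  fixes M :: "real mat"
  assumes psd: "positive_semidefinite n M"
  shows "positive_semidefinite n (psd_sqrt n M)" "psd_sqrt n M * psd_sqrt n M = M"
proof -
  from psd_exists[OF psd] obtain S where S: "positive_semidefinite n S" "S * S = M" by auto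
  have "psd_sqrt n M = S" unfolding psd_sqrt_def
  proof (rule the_equality)
    show "positive_semidefinite n S \<and> S * S = M" using S by simp
    fix T assume T: "positive_semidefinite n T \<and> T * T = M"
    show "T = S" by (rule psd_unique[of n T S], insert T S, auto)
  qed
  thus "positive_semidefinite n (psd_sqrt n M)" "psd_sqrt n M * psd_sqrt n M = M" using S by auto
qed

lemma sum_prod_index: "(\<Sum>r = 0..<k*d. f r) = (\<Sum>i = 0..<k. \<Sum>j = 0..<d. f (i*d + j :: nat) :: real)"
proof (induct k)
  case 0 thus ?case by simp
next
  case (Suc k)
  have e: "Suc k * d = k*d + d" by simp
  have "(\<Sum>r = 0..<Suc k * d. f r) = (\<Sum>r = 0..<k * d. f r) + (\<Sum>r = k*d..<k*d + d. f r)"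
    unfolding e by (rule sum.atLeastLessThan_concat[symmetric], auto)
  also have "(\<Sum>r = k*d..<k*d + d. f r) = (\<Sum>j = 0..<d. f (k*d + j))"
    using sum.shift_bounds_nat_ivl[of f 0 "k*d" d] by (simp add: add.commute)
  finally show ?case using Suc by simp
qed

lemma divmod_idx: "(j::nat) < d \<Longrightarrow> (i*d + j) div d = i \<and> (i*d + j) mod d = j"
  by simp

lemma idx_bound: "(i::nat) < k \<Longrightarrow> j < d \<Longrightarrow> i*d + j < k*d"
proof -
  assume "i < k" "j < d"
  hence "i*d + j < i*d + d" by simp
  also have "\<dots> = Suc i * d" by simp
  also have "\<dots> \<le> k * d" using \<open>i < k\<close> by (intro mult_right_mono, auto)
  finally show ?thesis .
qed

lemma swap3: "(\<Sum>j\<in>J. f j * (\<Sum>i\<in>I. \<Sum>l\<in>L. g i j l)) = (\<Sum>i\<in>I. \<Sum>j\<in>J. \<Sum>l\<in>L. f j * g i j l :: real)"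
  unfolding sum_distrib_left by (rule sum.swap)

lemma bilin_UDU:
  fixes U D :: "real mat"
  assumes U: "U \<in> carrier_mat n n" and D: "D \<in> carrier_mat n n" and dD: "diagonal_mat D"
    and x: "x \<in> carrier_vec n" and y: "y \<in> carrier_vec n"
  shows "x \<bullet> ((U * D * transpose_mat U) *\<^sub>v y) = (\<Sum>q = 0..<n. D $$ (q,q) * ((transpose_mat U *\<^sub>v x) $ q) * ((transpose_mat U *\<^sub>v y) $ q))"
proof -
  define x' where "x' = transpose_mat U *\<^sub>v x"
  define y' where "y' = transpose_mat U *\<^sub>v y"
  have x': "x' \<in> carrier_vec n" unfolding x'_def using U x by auto
  have y': "y' \<in> carrier_vec n" unfolding y'_def using U y by auto
  have "(U * D * transpose_mat U) *\<^sub>v y = U *\<^sub>v (D *\<^sub>v y')" unfolding y'_def using U D y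
    by (simp add: assoc_mult_mat_vec[of _ n n _ n])
  hence "x \<bullet> ((U * D * transpose_mat U) *\<^sub>v y) = x' \<bullet> (D *\<^sub>v y')"
    using transpose_vec_mult_scalar[OF U _ x, of "D *\<^sub>v y'"] D y' unfolding x'_def by auto
  also have "\<dots> = (\<Sum>i = 0..<n. x' $ i * (D *\<^sub>v y') $ i)" unfolding scalar_prod_def using D by simp
  also have "\<dots> = (\<Sum>i = 0..<n. D $$ (i,i) * x' $ i * y' $ i)"
    by (rule sum.cong, insert diag_mult_vec[OF D dD y'], auto)
  finally show ?thesis unfolding x'_def y'_def .
qed

lemma kron_quad_rows:
  fixes A C :: "real mat"
  assumes A: "A \<in> carrier_mat k k" and C: "C \<in> carrier_mat d d" and d: "d > 0"
    and x: "x \<in> carrier_vec (k*d)"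
  defines "r \<equiv> \<lambda>i. vec d (\<lambda>j. x $ (i*d + j))"
  shows "x \<bullet> (kron A C *\<^sub>v x) = (\<Sum>i = 0..<k. \<Sum>i' = 0..<k. A $$ (i,i') * (r i \<bullet> (C *\<^sub>v r i')))"
proof -
  define K where "K = kron A C"
  have K: "K \<in> carrier_mat (k*d) (k*d)" unfolding K_def kron_def using A C by auto
  have Ke: "K $$ (i*d+j, i'*d+j') = A $$ (i,i') * C $$ (j,j')" if "i < k" "j < d" "i' < k" "j' < d" for i j i' j'
    unfolding K_def kron_def using A C that idx_bound[of i k j d] idx_bound[of i' k j' d] by simp
  have rC: "r i \<bullet> (C *\<^sub>v r i') = (\<Sum>j = 0..<d. x $ (i*d+j) * (\<Sum>j' = 0..<d. C $$ (j,j') * x $ (i'*d+j')))" for i i'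
  proof -
    have "r i \<bullet> (C *\<^sub>v r i') = (\<Sum>j = 0..<d. r i $ j * (C *\<^sub>v r i') $ j)" unfolding scalar_prod_def using C by simp
    also have "\<dots> = (\<Sum>j = 0..<d. x $ (i*d+j) * (\<Sum>j' = 0..<d. C $$ (j,j') * x $ (i'*d+j')))"
    proof (rule sum.cong[OF refl])
      fix j assume "j \<in> {0..<d}"
      hence j: "j < d" by simp
      have "(C *\<^sub>v r i') $ j = (\<Sum>j' = 0..<d. C $$ (j,j') * r i' $ j')"
        by (rule mult_mat_vec_index_sum[OF C _ j], simp add: r_def)
      also have "\<dots> = (\<Sum>j' = 0..<d. C $$ (j,j') * x $ (i'*d+j'))" by (rule sum.cong, auto simp: r_def)
      finally show "r i $ j * (C *\<^sub>v r i') $ j = x $ (i*d+j) * (\<Sum>j' = 0..<d. C $$ (j,j') * x $ (i'*d+j'))"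
        using j by (simp add: r_def)
    qed
    finally show ?thesis .
  qed
  have "x \<bullet> (K *\<^sub>v x) = (\<Sum>s = 0..<k*d. x $ s * (K *\<^sub>v x) $ s)" unfolding scalar_prod_def using K by simp
  also have "\<dots> = (\<Sum>s = 0..<k*d. x $ s * (\<Sum>t = 0..<k*d. K $$ (s,t) * x $ t))"
    by (rule sum.cong[OF refl], subst mult_mat_vec_index_sum[OF K x], auto)
  also have "\<dots> = (\<Sum>i = 0..<k. \<Sum>j = 0..<d. x $ (i*d+j) * (\<Sum>i' = 0..<k. \<Sum>j' = 0..<d. K $$ (i*d+j,i'*d+j') * x $ (i'*d+j')))"
    unfolding sum_prod_index ..
  also have "\<dots> = (\<Sum>i = 0..<k. \<Sum>j = 0..<d. x $ (i*d+j) * (\<Sum>i' = 0..<k. \<Sum>j' = 0..<d. A $$ (i,i') * C $$ (j,j') * x $ (i'*d+j')))"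
    by (intro sum.cong refl, simp add: Ke)
  also have "\<dots> = (\<Sum>i = 0..<k. \<Sum>i' = 0..<k. \<Sum>j = 0..<d. \<Sum>j' = 0..<d. x $ (i*d+j) * (A $$ (i,i') * C $$ (j,j') * x $ (i'*d+j')))"
    by (rule sum.cong[OF refl], rule swap3)
  also have "\<dots> = (\<Sum>i = 0..<k. \<Sum>i' = 0..<k. A $$ (i,i') * (r i \<bullet> (C *\<^sub>v r i')))"
    unfolding rC sum_distrib_left by (intro sum.cong refl, simp add: mult_ac)
  finally show ?thesis unfolding K_def .
qed

lemma kron_quad:
  fixes A C :: "real mat"
  assumes A: "A \<in> carrier_mat k k" and C: "C \<in> carrier_mat d d" and Cs: "transpose_mat C = C" and d: "d > 0"
    and Ab: "\<And>y. y \<in> carrier_vec k \<Longrightarrow> a1 * (y \<bullet> y) \<le> y \<bullet> (A *\<^sub>v y) \<and> y \<bullet> (A *\<^sub>v y) \<le> a2 * (y \<bullet> y)"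
    and Cb: "\<And>z. z \<in> carrier_vec d \<Longrightarrow> c1 * (z \<bullet> z) \<le> z \<bullet> (C *\<^sub>v z) \<and> z \<bullet> (C *\<^sub>v z) \<le> c2 * (z \<bullet> z)"
    and a1: "a1 \<ge> 0" and c1: "c1 \<ge> 0"
    and x: "x \<in> carrier_vec (k*d)"
  shows "a1 * c1 * (x \<bullet> x) \<le> x \<bullet> (kron A C *\<^sub>v x) \<and> x \<bullet> (kron A C *\<^sub>v x) \<le> a2 * c2 * (x \<bullet> x)"
proof -
  define r where "r = (\<lambda>i. vec d (\<lambda>j. x $ (i*d + j)))"
  have r: "r i \<in> carrier_vec d" for i unfolding r_def by simp
  from spectral[OF C Cs] obtain V E where V: "V \<in> carrier_mat d d" and E: "E \<in> carrier_mat d d"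
    and dE: "diagonal_mat E" and VV: "transpose_mat V * V = 1\<^sub>m d" and VV': "V * transpose_mat V = 1\<^sub>m d"
    and CV: "C = V * E * transpose_mat V" by auto
  define y where "y = (\<lambda>i q. (transpose_mat V *\<^sub>v r i) $ q)"
  define Y where "Y = (\<lambda>q. vec k (\<lambda>i. y i q))"
  have Y: "Y q \<in> carrier_vec k" for q unfolding Y_def by simp
  have rCr: "r i \<bullet> (C *\<^sub>v r i') = (\<Sum>q = 0..<d. E $$ (q,q) * y i q * y i' q)" for i i'
    unfolding CV y_def by (rule bilin_UDU[OF V E dE r r])
  have YAY: "Y q \<bullet> (A *\<^sub>v Y q) = (\<Sum>i = 0..<k. \<Sum>i' = 0..<k. y i q * (A $$ (i,i') * y i' q))" for q
  proof -
    have "Y q \<bullet> (A *\<^sub>v Y q) = (\<Sum>i = 0..<k. Y q $ i * (A *\<^sub>v Y q) $ i)" unfolding scalar_prod_def using A by simp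
    also have "\<dots> = (\<Sum>i = 0..<k. y i q * (\<Sum>i' = 0..<k. A $$ (i,i') * y i' q))"
    proof (rule sum.cong[OF refl])
      fix i assume "i \<in> {0..<k}" hence i: "i < k" by simp
      have "(A *\<^sub>v Y q) $ i = (\<Sum>i' = 0..<k. A $$ (i,i') * Y q $ i')" by (rule mult_mat_vec_index_sum[OF A Y i])
      also have "\<dots> = (\<Sum>i' = 0..<k. A $$ (i,i') * y i' q)" by (rule sum.cong, auto simp: Y_def)
      finally show "Y q $ i * (A *\<^sub>v Y q) $ i = y i q * (\<Sum>i' = 0..<k. A $$ (i,i') * y i' q)"
        using i by (simp add: Y_def)
    qed
    also have "\<dots> = (\<Sum>i = 0..<k. \<Sum>i' = 0..<k. y i q * (A $$ (i,i') * y i' q))" unfolding sum_distrib_left ..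
    finally show ?thesis .
  qed
  have quad: "x \<bullet> (kron A C *\<^sub>v x) = (\<Sum>q = 0..<d. E $$ (q,q) * (Y q \<bullet> (A *\<^sub>v Y q)))"
  proof -
    have "x \<bullet> (kron A C *\<^sub>v x) = (\<Sum>i = 0..<k. \<Sum>i' = 0..<k. A $$ (i,i') * (r i \<bullet> (C *\<^sub>v r i')))"
      unfolding r_def by (rule kron_quad_rows[OF A C d x])
    also have "\<dots> = (\<Sum>i = 0..<k. \<Sum>i' = 0..<k. \<Sum>q = 0..<d. E $$ (q,q) * (y i q * (A $$ (i,i') * y i' q)))"
      unfolding rCr sum_distrib_left by (intro sum.cong refl, simp add: mult_ac)
    also have "\<dots> = (\<Sum>i = 0..<k. \<Sum>q = 0..<d. \<Sum>i' = 0..<k. E $$ (q,q) * (y i q * (A $$ (i,i') * y i' q)))"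
      by (rule sum.cong[OF refl], rule sum.swap)
    also have "\<dots> = (\<Sum>q = 0..<d. \<Sum>i = 0..<k. \<Sum>i' = 0..<k. E $$ (q,q) * (y i q * (A $$ (i,i') * y i' q)))"
      by (rule sum.swap)
    also have "\<dots> = (\<Sum>q = 0..<d. E $$ (q,q) * (Y q \<bullet> (A *\<^sub>v Y q)))"
      unfolding YAY sum_distrib_left ..
    finally show ?thesis .
  qed
  have norm: "x \<bullet> x = (\<Sum>q = 0..<d. Y q \<bullet> Y q)"
  proof -
    have "x \<bullet> x = (\<Sum>s = 0..<k*d. (x $ s)^2)" using sprod_sum_sq[of x] x by simp
    also have "\<dots> = (\<Sum>i = 0..<k. \<Sum>j = 0..<d. (x $ (i*d+j))^2)" unfolding sum_prod_index ..
    also have "\<dots> = (\<Sum>i = 0..<k. r i \<bullet> r i)"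
      by (rule sum.cong[OF refl], subst sprod_sum_sq, simp add: r_def)
    also have "\<dots> = (\<Sum>i = 0..<k. (transpose_mat V *\<^sub>v r i) \<bullet> (transpose_mat V *\<^sub>v r i))"
      using norm_UT[OF V VV' r] by simp
    also have "\<dots> = (\<Sum>i = 0..<k. \<Sum>q = 0..<d. (y i q)^2)"
      by (rule sum.cong[OF refl], subst sprod_sum_sq, insert V, simp add: y_def)
    also have "\<dots> = (\<Sum>q = 0..<d. \<Sum>i = 0..<k. (y i q)^2)" by (rule sum.swap)
    also have "\<dots> = (\<Sum>q = 0..<d. Y q \<bullet> Y q)"
      by (rule sum.cong[OF refl], subst sprod_sum_sq, simp add: Y_def)
    finally show ?thesis .
  qed
  have mu: "c1 \<le> E $$ (q,q) \<and> E $$ (q,q) \<le> c2" if q: "q < d" for q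
  proof -
    define v where "v = col V q"
    have v: "v \<in> carrier_vec d" unfolding v_def using V by auto
    have "transpose_mat V *\<^sub>v v = col (transpose_mat V * V) q" unfolding v_def
      by (rule col_mult2[symmetric], insert V q, auto)
    also have "\<dots> = unit_vec d q" unfolding VV using q by simp
    finally have Vv: "transpose_mat V *\<^sub>v v = unit_vec d q" .
    have "v \<bullet> v = (transpose_mat V * V) $$ (q,q)" unfolding v_def using V q by simp
    hence vv: "v \<bullet> v = 1" unfolding VV using q by simp
    have "v \<bullet> (C *\<^sub>v v) = (\<Sum>p = 0..<d. E $$ (p,p) * ((transpose_mat V *\<^sub>v v) $ p)^2)"
      unfolding CV by (rule quad_UDU[OF V E dE v])
    also have "\<dots> = (\<Sum>p \<in> {q}. E $$ (p,p) * ((transpose_mat V *\<^sub>v v) $ p)^2)"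
      by (rule sum.mono_neutral_right, insert q, auto simp: Vv)
    also have "\<dots> = E $$ (q,q)" using q by (simp add: Vv)
    finally have "v \<bullet> (C *\<^sub>v v) = E $$ (q,q)" .
    with Cb[OF v] vv show ?thesis by simp
  qed
  have YAY0: "a1 * (Y q \<bullet> Y q) \<le> Y q \<bullet> (A *\<^sub>v Y q)" "Y q \<bullet> (A *\<^sub>v Y q) \<le> a2 * (Y q \<bullet> Y q)" for q
    using Ab[OF Y] by auto
  have YY0: "Y q \<bullet> Y q \<ge> 0" for q by (rule sprod_self_ge0)
  have lo: "a1 * c1 * (Y q \<bullet> Y q) \<le> E $$ (q,q) * (Y q \<bullet> (A *\<^sub>v Y q))" if q: "q < d" for q
  proof -
    have p: "Y q \<bullet> (A *\<^sub>v Y q) \<ge> 0" using YAY0(1)[of q] a1 YY0[of q] by (meson order_trans zero_le_mult_iff)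
    have "a1 * c1 * (Y q \<bullet> Y q) = c1 * (a1 * (Y q \<bullet> Y q))" by simp
    also have "\<dots> \<le> c1 * (Y q \<bullet> (A *\<^sub>v Y q))" by (rule mult_left_mono[OF YAY0(1) c1])
    also have "\<dots> \<le> E $$ (q,q) * (Y q \<bullet> (A *\<^sub>v Y q))" by (rule mult_right_mono[OF _ p], insert mu[OF q], auto)
    finally show ?thesis .
  qed
  have hi: "E $$ (q,q) * (Y q \<bullet> (A *\<^sub>v Y q)) \<le> a2 * c2 * (Y q \<bullet> Y q)" if q: "q < d" for q
  proof -
    have p: "Y q \<bullet> (A *\<^sub>v Y q) \<ge> 0" using YAY0(1)[of q] a1 YY0[of q] by (meson order_trans zero_le_mult_iff)
    have e0: "E $$ (q,q) \<ge> 0" using mu[OF q] c1 by auto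
    have "E $$ (q,q) * (Y q \<bullet> (A *\<^sub>v Y q)) \<le> E $$ (q,q) * (a2 * (Y q \<bullet> Y q))"
      by (rule mult_left_mono[OF YAY0(2) e0])
    also have "\<dots> \<le> c2 * (a2 * (Y q \<bullet> Y q))"
      by (rule mult_right_mono, insert mu[OF q] p YAY0(2)[of q], auto)
    finally show ?thesis by (simp add: mult_ac)
  qed
  show ?thesis unfolding quad norm sum_distrib_left
    by (intro conjI sum_mono, insert lo hi, auto)
qed

lemma Wdown_Suc: "j \<le> Suc i \<Longrightarrow> Wdown a W \<beta> (Suc i) j = layer a W \<beta> (Suc i) * Wdown a W \<beta> i j"
  unfolding Wdown_def by (simp add: upt_Suc_append)

lemma Wdown_base: "Wdown a W \<beta> i (Suc i) = 1\<^sub>m (a i)"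
  unfolding Wdown_def by simp

lemma Wup_base: "Wup a W \<beta> (Suc j) j = 1\<^sub>m (a j)"
  unfolding Wup_def by simp

lemma Wup_cons: "i \<le> j \<Longrightarrow> Wup a W \<beta> i j = transpose_mat (layer a W \<beta> i) * Wup a W \<beta> (Suc i) j"
  unfolding Wup_def by (subst upt_conv_Cons, simp, simp only: foldr_Cons comp_def)

context
  fixes a :: "nat \<Rightarrow> nat" and W :: "nat \<Rightarrow> real mat" and \<beta> :: real and N :: nat
  assumes lay: "\<And>l. 1 \<le> l \<Longrightarrow> l \<le> N \<Longrightarrow> layer a W \<beta> l \<in> carrier_mat (a l) (a (l - 1))"
begin

lemma Wdown_carrier: "1 \<le> j \<Longrightarrow> j \<le> Suc i \<Longrightarrow> i \<le> N \<Longrightarrow> Wdown a W \<beta> i j \<in> carrier_mat (a i) (a (j - 1))"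
proof (induct i)
  case 0
  hence "j = 1" by auto
  thus ?case using Wdown_base[of a W \<beta> 0] by simp
next
  case (Suc i)
  show ?case
  proof (cases "j = Suc (Suc i)")
    case True thus ?thesis using Wdown_base[of a W \<beta> "Suc i"] by simp
  next
    case False
    hence j: "j \<le> Suc i" using Suc by auto
    have "Wdown a W \<beta> i j \<in> carrier_mat (a i) (a (j - 1))" using Suc j by auto
    moreover have "layer a W \<beta> (Suc i) \<in> carrier_mat (a (Suc i)) (a i)" using lay[of "Suc i"] Suc by auto
    ultimately show ?thesis unfolding Wdown_Suc[OF j] by auto
  qed
qed

lemma Wdown_bottom: "1 \<le> j \<Longrightarrow> j \<le> i \<Longrightarrow> i \<le> N \<Longrightarrow> Wdown a W \<beta> i j = Wdown a W \<beta> i (Suc j) * layer a W \<beta> j"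
proof (induct i arbitrary: j)
  case 0 thus ?case by simp
next
  case (Suc i j)
  have Lj: "layer a W \<beta> j \<in> carrier_mat (a j) (a (j - 1))" using lay Suc by auto
  show ?case
  proof (cases "j = Suc i")
    case True
    have "Wdown a W \<beta> (Suc i) j = layer a W \<beta> j * 1\<^sub>m (a (j - 1))"
      unfolding True Wdown_Suc[of "Suc i" i, OF le_refl] using Wdown_base[of a W \<beta> i] by simp
    also have "\<dots> = layer a W \<beta> j" using Lj by simp
    also have "\<dots> = 1\<^sub>m (a j) * layer a W \<beta> j" using Lj by simp
    also have "1\<^sub>m (a j) = Wdown a W \<beta> (Suc i) (Suc j)" unfolding True Wdown_base ..
    finally show ?thesis .
  next
    case False
    hence j: "j \<le> i" using Suc by auto
    have Ls: "layer a W \<beta> (Suc i) \<in> carrier_mat (a (Suc i)) (a i)" using lay[of "Suc i"] Suc by auto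
    have Wd: "Wdown a W \<beta> i (Suc j) \<in> carrier_mat (a i) (a j)" using Wdown_carrier[of "Suc j" i] j Suc by auto
    have "Wdown a W \<beta> (Suc i) j = layer a W \<beta> (Suc i) * Wdown a W \<beta> i j" using Wdown_Suc[of j i] j by simp
    also have "\<dots> = layer a W \<beta> (Suc i) * (Wdown a W \<beta> i (Suc j) * layer a W \<beta> j)" using Suc j by simp
    also have "\<dots> = (layer a W \<beta> (Suc i) * Wdown a W \<beta> i (Suc j)) * layer a W \<beta> j"
      using Ls Wd Lj by simp
    also have "layer a W \<beta> (Suc i) * Wdown a W \<beta> i (Suc j) = Wdown a W \<beta> (Suc i) (Suc j)"
      using Wdown_Suc[of "Suc j" i] j by simp
    finally show ?thesis .
  qed
qed

lemma Wup_transpose: "1 \<le> j \<Longrightarrow> j \<le> Suc i \<Longrightarrow> i \<le> N \<Longrightarrow> Wup a W \<beta> j i = transpose_mat (Wdown a W \<beta> i j)"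
proof (induct "Suc i - j" arbitrary: j)
  case 0
  hence "j = Suc i" by auto
  thus ?case using Wup_base[of a W \<beta> i] Wdown_base[of a W \<beta> i] by simp
next
  case (Suc t j)
  hence j: "j \<le> i" by auto
  have IH: "Wup a W \<beta> (Suc j) i = transpose_mat (Wdown a W \<beta> i (Suc j))" using Suc j by auto
  have Lj: "layer a W \<beta> j \<in> carrier_mat (a j) (a (j - 1))" using lay Suc j by auto
  have Wd: "Wdown a W \<beta> i (Suc j) \<in> carrier_mat (a i) (a j)" using Wdown_carrier[of "Suc j" i] j Suc by auto
  have "Wup a W \<beta> j i = transpose_mat (layer a W \<beta> j) * transpose_mat (Wdown a W \<beta> i (Suc j))"
    unfolding Wup_cons[OF j] IH ..
  also have "\<dots> = transpose_mat (Wdown a W \<beta> i (Suc j) * layer a W \<beta> j)"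
    by (rule transpose_mult[symmetric, OF Wd Lj])
  also have "Wdown a W \<beta> i (Suc j) * layer a W \<beta> j = Wdown a W \<beta> i j"
    using Wdown_bottom[of j i] Suc j by simp
  finally show ?case .
qed

end

lemma gram_quad:
  fixes M :: "real mat"
  assumes M: "M \<in> carrier_mat p q" and x: "x \<in> carrier_vec p"
  shows "x \<bullet> ((M * transpose_mat M) *\<^sub>v x) = (transpose_mat M *\<^sub>v x) \<bullet> (transpose_mat M *\<^sub>v x)"
proof -
  have "(M * transpose_mat M) *\<^sub>v x = M *\<^sub>v (transpose_mat M *\<^sub>v x)" using M x by auto
  thus ?thesis using transpose_vec_mult_scalar[OF M _ x, of "transpose_mat M *\<^sub>v x"] M x by auto
qed

lemma gram_psd:
  fixes M :: "real mat"
  assumes M: "M \<in> carrier_mat p q"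
  shows "positive_semidefinite p (M * transpose_mat M)"
  unfolding positive_semidefinite_def
proof (intro conjI ballI)
  show "M * transpose_mat M \<in> carrier_mat p p" using M by auto
  show "transpose_mat (M * transpose_mat M) = M * transpose_mat M"
    using transpose_mult[of M p q "transpose_mat M" p] M by auto
  fix x :: "real vec" assume x: "x \<in> carrier_vec p"
  show "0 \<le> x \<bullet> (M * transpose_mat M *\<^sub>v x)" unfolding gram_quad[OF M x] by (rule sprod_self_ge0)
qed

lemma gram_psd':
  fixes M :: "real mat"
  assumes M: "M \<in> carrier_mat p q"
  shows "positive_semidefinite q (transpose_mat M * M)"
  using gram_psd[of "transpose_mat M" q p] M by auto

lemma psd_sym: "positive_semidefinite n M \<Longrightarrow> M \<in> carrier_mat n n \<and> transpose_mat M = M"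
  unfolding positive_semidefinite_def by auto

lemma psd_lmin_nonneg:
  fixes M :: "real mat"
  assumes "positive_semidefinite n M" "n > 0"
  shows "lambda_min M \<ge> 0" "lambda_max M \<ge> 0"
proof -
  have M: "M \<in> carrier_mat n n" "transpose_mat M = M" using psd_sym[OF assms(1)] by auto
  show "lambda_min M \<ge> 0" by (rule psd_eig_nonneg[OF assms(1) sym_facts(3)[OF M assms(2)]])
  show "lambda_max M \<ge> 0" by (rule psd_eig_nonneg[OF assms(1) sym_facts(4)[OF M assms(2)]])
qed

lemma lmax_swap:
  fixes M :: "real mat"
  assumes M: "M \<in> carrier_mat p q" and p: "p > 0" and q: "q > 0"
  shows "lambda_max (M * transpose_mat M) \<le> lambda_max (transpose_mat M * M)"
proof -
  have P1: "positive_semidefinite p (M * transpose_mat M)" by (rule gram_psd[OF M])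
  have P2: "positive_semidefinite q (transpose_mat M * M)" by (rule gram_psd'[OF M])
  note S1 = psd_sym[OF P1] and S2 = psd_sym[OF P2]
  define e where "e = lambda_max (M * transpose_mat M)"
  have ev: "eigenvalue (M * transpose_mat M) e" unfolding e_def using sym_facts(4)[OF conjunct1[OF S1] conjunct2[OF S1] p] .
  show ?thesis
  proof (cases "e > 0")
    case False
    thus ?thesis using psd_lmin_nonneg(2)[OF P2 q] unfolding e_def by simp
  next
    case True
    from ev obtain v where v: "v \<in> carrier_vec p" "v \<noteq> 0\<^sub>v p" "(M * transpose_mat M) *\<^sub>v v = e \<cdot>\<^sub>v v"
      unfolding eigenvalue_def eigenvector_def using M by auto
    define w where "w = transpose_mat M *\<^sub>v v"
    have w: "w \<in> carrier_vec q" unfolding w_def using M v by auto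
    have "M *\<^sub>v w = (M * transpose_mat M) *\<^sub>v v" unfolding w_def
      by (rule assoc_mult_mat_vec[symmetric], insert M v, auto)
    hence Mw: "M *\<^sub>v w = e \<cdot>\<^sub>v v" unfolding v(3) .
    have w0: "w \<noteq> 0\<^sub>v q"
    proof
      assume "w = 0\<^sub>v q"
      hence "M *\<^sub>v w = 0\<^sub>v p" using M by (intro eq_vecI, auto)
      hence "e \<cdot>\<^sub>v v = 0\<^sub>v p" using Mw by simp
      hence "(e \<cdot>\<^sub>v v) \<bullet> v = 0" using v by simp
      hence "e * (v \<bullet> v) = 0" using v by simp
      with True sprod_self_gt0[OF v(1,2)] show False by simp
    qed
    have "(transpose_mat M * M) *\<^sub>v w = transpose_mat M *\<^sub>v (M *\<^sub>v w)" using M w by auto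
    also have "\<dots> = e \<cdot>\<^sub>v w" unfolding Mw w_def using M v by (simp add: mult_mat_vec[of _ q p])
    finally have "eigenvalue (transpose_mat M * M) e" unfolding eigenvalue_def eigenvector_def
      using w w0 M by (intro exI[of _ w], auto)
    thus ?thesis unfolding e_def by (rule eig_bounds(2)[OF conjunct1[OF S2] conjunct2[OF S2] q])
  qed
qed

lemma kron_carrier: "A \<in> carrier_mat k k \<Longrightarrow> C \<in> carrier_mat d d \<Longrightarrow> kron A C \<in> carrier_mat (k*d) (k*d)"
  unfolding kron_def by auto

lemma kron_sym:
  fixes A C :: "real mat"
  assumes A: "A \<in> carrier_mat k k" "transpose_mat A = A" and C: "C \<in> carrier_mat d d" "transpose_mat C = C"
  shows "transpose_mat (kron A C) = kron A C"
proof (rule eq_matI)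
  fix i j assume "i < dim_row (kron A C)" "j < dim_col (kron A C)"
  hence i: "i < k*d" and j: "j < k*d" using A C unfolding kron_def by auto
  have d: "d > 0" using i by (cases d, auto)
  have id: "i div d < k" "j div d < k" using i j less_mult_imp_div_less[of i k d] less_mult_imp_div_less[of j k d] by auto
  have im: "i mod d < d" "j mod d < d" using d by auto
  have "A $$ (j div d, i div d) = A $$ (i div d, j div d)"
    using arg_cong[OF A(2), of "\<lambda>M. M $$ (i div d, j div d)"] A(1) id by simp
  moreover have "C $$ (j mod d, i mod d) = C $$ (i mod d, j mod d)"
    using arg_cong[OF C(2), of "\<lambda>M. M $$ (i mod d, j mod d)"] C(1) im by simp
  ultimately show "transpose_mat (kron A C) $$ (i,j) = kron A C $$ (i,j)"
    using i j A(1) C(1) unfolding kron_def by simp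
qed (insert A C, auto simp: kron_def)

lemma foldr_sum_mat:
  fixes T :: "nat \<Rightarrow> real mat"
  assumes T: "\<And>l. l \<in> set ls \<Longrightarrow> T l \<in> carrier_mat n n \<and> transpose_mat (T l) = T l"
  shows "foldr (+) (map T ls) (0\<^sub>m n n) \<in> carrier_mat n n \<and>
         transpose_mat (foldr (+) (map T ls) (0\<^sub>m n n)) = foldr (+) (map T ls) (0\<^sub>m n n) \<and>
         (\<forall>x \<in> carrier_vec n. x \<bullet> (foldr (+) (map T ls) (0\<^sub>m n n) *\<^sub>v x) = (\<Sum>l \<leftarrow> ls. x \<bullet> (T l *\<^sub>v x)))"
  using T
proof (induct ls)
  case Nil
  have "x \<bullet> (0\<^sub>m n n *\<^sub>v x) = 0" if x: "x \<in> carrier_vec n" for x :: "real vec"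
  proof -
    have "0\<^sub>m n n *\<^sub>v x = 0\<^sub>v n" using x by (intro eq_vecI, auto simp: scalar_prod_def)
    thus ?thesis using x by simp
  qed
  thus ?case by (auto intro!: eq_matI)
next
  case (Cons l ls)
  define R where "R = foldr (+) (map T ls) (0\<^sub>m n n)"
  have IH: "R \<in> carrier_mat n n" "transpose_mat R = R"
    "\<And>x. x \<in> carrier_vec n \<Longrightarrow> x \<bullet> (R *\<^sub>v x) = (\<Sum>l \<leftarrow> ls. x \<bullet> (T l *\<^sub>v x))"
    using Cons unfolding R_def by auto
  have Tl: "T l \<in> carrier_mat n n" "transpose_mat (T l) = T l" using Cons by auto
  have e: "foldr (+) (map T (l # ls)) (0\<^sub>m n n) = T l + R" unfolding R_def by simp
  show ?case unfolding e
  proof (intro conjI ballI)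
    show "T l + R \<in> carrier_mat n n" using Tl IH by auto
    show "transpose_mat (T l + R) = T l + R" using Tl IH by (simp add: transpose_add)
    fix x :: "real vec" assume x: "x \<in> carrier_vec n"
    have "(T l + R) *\<^sub>v x = T l *\<^sub>v x + R *\<^sub>v x" using Tl IH x by (simp add: add_mult_distrib_mat_vec)
    hence "x \<bullet> ((T l + R) *\<^sub>v x) = x \<bullet> (T l *\<^sub>v x) + x \<bullet> (R *\<^sub>v x)"
      using Tl IH x by (simp add: scalar_prod_add_distrib[of _ n])
    thus "x \<bullet> ((T l + R) *\<^sub>v x) = (\<Sum>l \<leftarrow> l # ls. x \<bullet> (T l *\<^sub>v x))" using IH(3)[OF x] by simp
  qed
qed

theorem mainTheorem3:
  fixes L d k m :: nat and W :: "nat \<Rightarrow> real mat" and \<beta> :: real and \<Sigma> :: "real mat"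
  defines "a \<equiv> widths L d k m"
  defines "G \<equiv> foldr (+) (map (\<lambda>l. kron (Wdown a W \<beta> L (l + 1) * Wup a W \<beta> (l + 1) L)
                 (psd_sqrt d \<Sigma> * Wup a W \<beta> 1 (l - 1) * Wdown a W \<beta> (l - 1) 1 * psd_sqrt d \<Sigma>))
              [1..<Suc L]) (0\<^sub>m (k * d) (k * d))"
  defines "\<alpha> \<equiv> \<lambda>l. (sigma_min (Wdown a W \<beta> L (l + 1)))\<^sup>2 * (sigma_min (Wup a W \<beta> 1 (l - 1)))\<^sup>2"
  defines "\<gamma> \<equiv> \<lambda>l. \<alpha> l / (\<Sum>i = 1..L. \<alpha> i)"
  assumes "L \<ge> 1" and "d > 0" and "k > 0" and "m > max d k"
  assumes "\<forall>l \<in> {1..L}. W l \<in> carrier_mat (a l) (a (l - 1))"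
  assumes "positive_definite d \<Sigma>"
  assumes "\<forall>l \<in> {1..L}. \<alpha> l > 0"
  shows "positive_definite (k * d) G \<and>
    kappa_spd G \<le> kappa_spd \<Sigma> * (\<Sum>l = 1..L. \<gamma> l * (kappa_rect (Wdown a W \<beta> L (l + 1)))\<^sup>2
                                              * (kappa_rect (Wup a W \<beta> 1 (l - 1)))\<^sup>2) \<and>
    kappa_spd \<Sigma> * (\<Sum>l = 1..L. \<gamma> l * (kappa_rect (Wdown a W \<beta> L (l + 1)))\<^sup>2
                                              * (kappa_rect (Wup a W \<beta> 1 (l - 1)))\<^sup>2)
      \<le> kappa_spd \<Sigma> * Max ((\<lambda>l. (kappa_rect (Wdown a W \<beta> L (l + 1)))\<^sup>2
                                    * (kappa_rect (Wup a W \<beta> 1 (l - 1)))\<^sup>2) ` {1..L})"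
proof -
  note a_def = \<open>a \<equiv> widths L d k m\<close>
  note G_def = \<open>G \<equiv> foldr (+) (map (\<lambda>l. kron (Wdown a W \<beta> L (l + 1) * Wup a W \<beta> (l + 1) L)
                 (psd_sqrt d \<Sigma> * Wup a W \<beta> 1 (l - 1) * Wdown a W \<beta> (l - 1) 1 * psd_sqrt d \<Sigma>))
              [1..<Suc L]) (0\<^sub>m (k * d) (k * d))\<close>
  note \<alpha>_def = \<open>\<alpha> \<equiv> \<lambda>l. (sigma_min (Wdown a W \<beta> L (l + 1)))\<^sup>2 * (sigma_min (Wup a W \<beta> 1 (l - 1)))\<^sup>2\<close>
  note \<gamma>_def = \<open>\<gamma> \<equiv> \<lambda>l. \<alpha> l / (\<Sum>i = 1..L. \<alpha> i)\<close>
  note L1 = \<open>L \<ge> 1\<close> and d0 = \<open>d > 0\<close> and k0 = \<open>k > 0\<close> and mdk = \<open>m > max d k\<close>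
  note Wc = \<open>\<forall>l \<in> {1..L}. W l \<in> carrier_mat (a l) (a (l - 1))\<close>
  note SigPD = \<open>positive_definite d \<Sigma>\<close>
  note \<alpha>pos = \<open>\<forall>l \<in> {1..L}. \<alpha> l > 0\<close>
  have aL: "a L = k" and a0: "a 0 = d" using L1 unfolding a_def widths_def by auto
  have am: "a l = m" if "0 < l" "l < L" for l using that unfolding a_def widths_def by auto
  have apos: "a l > 0" for l using d0 k0 mdk unfolding a_def widths_def by auto
  have lay: "layer a W \<beta> l \<in> carrier_mat (a l) (a (l - 1))" if "1 \<le> l" "l \<le> L" for l
    unfolding layer_def rect_id_def using Wc that by auto
  define P where "P = (\<lambda>l. Wdown a W \<beta> L (l + 1))"
  define B where "B = (\<lambda>l. Wdown a W \<beta> (l - 1) 1)"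
  have Pc: "P l \<in> carrier_mat k (a l)" if "l \<in> {1..L}" for l
    using Wdown_carrier[where a=a and W=W and \<beta>=\<beta> and N=L and j="l+1" and i=L, OF lay] that aL unfolding P_def by auto
  have Bc: "B l \<in> carrier_mat (a (l - 1)) d" if "l \<in> {1..L}" for l
    using Wdown_carrier[where a=a and W=W and \<beta>=\<beta> and N=L and j=1 and i="l - 1", OF lay] that a0 unfolding B_def by auto
  have PT: "Wup a W \<beta> (l + 1) L = transpose_mat (P l)" if "l \<in> {1..L}" for l
    using Wup_transpose[where a=a and W=W and \<beta>=\<beta> and N=L and j="l+1" and i=L, OF lay] that unfolding P_def by auto
  have BT: "Wup a W \<beta> 1 (l - 1) = transpose_mat (B l)" if "l \<in> {1..L}" for l
    using Wup_transpose[where a=a and W=W and \<beta>=\<beta> and N=L and j=1 and i="l - 1", OF lay] that unfolding B_def by auto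
  define S where "S = psd_sqrt d \<Sigma>"
  have SigPSD: "positive_semidefinite d \<Sigma>" unfolding positive_semidefinite_def
  proof (intro conjI ballI)
    show "\<Sigma> \<in> carrier_mat d d" "transpose_mat \<Sigma> = \<Sigma>" using SigPD unfolding positive_definite_def by auto
    fix x :: "real vec" assume x: "x \<in> carrier_vec d"
    show "0 \<le> x \<bullet> (\<Sigma> *\<^sub>v x)"
    proof (cases "x = 0\<^sub>v d")
      case True thus ?thesis using SigPD unfolding positive_definite_def by auto
    next
      case False thus ?thesis using SigPD x unfolding positive_definite_def by force
    qed
  qed
  have Sigc: "\<Sigma> \<in> carrier_mat d d" and Sigs: "transpose_mat \<Sigma> = \<Sigma>" using SigPD unfolding positive_definite_def by auto
  have Spsd: "positive_semidefinite d S" and SS: "S * S = \<Sigma>" unfolding S_def using psd_sqrt_props[OF SigPSD] by auto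
  have Sc: "S \<in> carrier_mat d d" and Ss: "transpose_mat S = S" using psd_sym[OF Spsd] by auto
  define AA where "AA = (\<lambda>l. P l * transpose_mat (P l))"
  define BB where "BB = (\<lambda>l. transpose_mat (B l) * B l)"
  define MM where "MM = (\<lambda>l. S * transpose_mat (B l))"
  define CC where "CC = (\<lambda>l. MM l * transpose_mat (MM l))"
  have AAc: "AA l \<in> carrier_mat k k" if "l \<in> {1..L}" for l unfolding AA_def using Pc[OF that] by auto
  have AAp: "positive_semidefinite k (AA l)" if "l \<in> {1..L}" for l
    unfolding AA_def by (rule gram_psd[OF Pc[OF that]])
  have BBp: "positive_semidefinite d (BB l)" if "l \<in> {1..L}" for l
    unfolding BB_def by (rule gram_psd'[OF Bc[OF that]])
  have MMc: "MM l \<in> carrier_mat d (a (l - 1))" if "l \<in> {1..L}" for l unfolding MM_def using Sc Bc[OF that] by auto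
  have CCp: "positive_semidefinite d (CC l)" if "l \<in> {1..L}" for l
    unfolding CC_def by (rule gram_psd[OF MMc[OF that]])
  have CCc: "CC l \<in> carrier_mat d d" "transpose_mat (CC l) = CC l" if "l \<in> {1..L}" for l
    using psd_sym[OF CCp[OF that]] by auto
  have MMT: "transpose_mat (MM l) = B l * S" if "l \<in> {1..L}" for l
    unfolding MM_def using transpose_mult[OF Sc, of "transpose_mat (B l)" "a (l - 1)"] Bc[OF that] Ss by auto
  have Teq: "kron (Wdown a W \<beta> L (l + 1) * Wup a W \<beta> (l + 1) L)
                 (psd_sqrt d \<Sigma> * Wup a W \<beta> 1 (l - 1) * Wdown a W \<beta> (l - 1) 1 * psd_sqrt d \<Sigma>)
       = kron (AA l) (CC l)" if l: "l \<in> {1..L}" for l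
  proof -
    have "S * transpose_mat (B l) * B l * S = (S * transpose_mat (B l)) * (B l * S)"
      by (rule assoc_mult_mat, insert Sc Bc[OF l], auto)
    also have "\<dots> = CC l" unfolding CC_def MMT[OF l] unfolding MM_def ..
    finally have "S * transpose_mat (B l) * B l * S = CC l" .
    thus ?thesis unfolding PT[OF l] BT[OF l] AA_def S_def[symmetric] P_def B_def by simp
  qed
  define T where "T = (\<lambda>l. kron (AA l) (CC l))"
  have Gform: "G = foldr (+) (map T [1..<Suc L]) (0\<^sub>m (k * d) (k * d))"
    unfolding G_def T_def by (rule arg_cong[of _ _ "\<lambda>xs. foldr (+) xs (0\<^sub>m (k * d) (k * d))"], rule map_cong[OF refl], rule Teq, auto)
  have Tc: "T l \<in> carrier_mat (k*d) (k*d) \<and> transpose_mat (T l) = T l" if "l \<in> set [1..<Suc L]" for l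
  proof -
    have l: "l \<in> {1..L}" using that by auto
    show ?thesis unfolding T_def using kron_carrier[OF AAc[OF l] CCc(1)[OF l]]
      kron_sym[OF AAc[OF l] conjunct2[OF psd_sym[OF AAp[OF l]]] CCc[OF l]] by auto
  qed
  have Gfacts: "G \<in> carrier_mat (k*d) (k*d) \<and> transpose_mat G = G \<and>
     (\<forall>x \<in> carrier_vec (k*d). x \<bullet> (G *\<^sub>v x) = (\<Sum>l \<leftarrow> [1..<Suc L]. x \<bullet> (T l *\<^sub>v x)))"
    unfolding Gform by (rule foldr_sum_mat, rule Tc)
  have Gc: "G \<in> carrier_mat (k*d) (k*d)" and Gs: "transpose_mat G = G" using Gfacts by auto
  have Gq: "x \<bullet> (G *\<^sub>v x) = (\<Sum>l = 1..L. x \<bullet> (T l *\<^sub>v x))" if "x \<in> carrier_vec (k*d)" for x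
  proof -
    have "x \<bullet> (G *\<^sub>v x) = (\<Sum>l \<leftarrow> [1..<Suc L]. x \<bullet> (T l *\<^sub>v x))" using Gfacts that by auto
    also have "\<dots> = (\<Sum>l \<in> set [1..<Suc L]. x \<bullet> (T l *\<^sub>v x))" by (rule sum_set_upt_conv_sum_list_nat[symmetric])
    also have "set [1..<Suc L] = {1..L}" by auto
    finally show ?thesis .
  qed
  define sl where "sl = lambda_min \<Sigma>"
  define SL where "SL = lambda_max \<Sigma>"
  have sl0: "sl > 0"
  proof -
    obtain v where v: "v \<in> carrier_vec d" "v \<bullet> v > 0" "v \<bullet> (\<Sigma> *\<^sub>v v) = sl * (v \<bullet> v)"
      using eig_quad[OF Sigc sym_facts(3)[OF Sigc Sigs d0]] unfolding sl_def by blast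
    have "v \<noteq> 0\<^sub>v d" using v by auto
    hence "v \<bullet> (\<Sigma> *\<^sub>v v) > 0" using SigPD v(1) unfolding positive_definite_def by auto
    with v(2,3) show ?thesis by (simp add: zero_less_mult_iff)
  qed
  have slSL: "sl \<le> SL" unfolding sl_def SL_def
    by (rule eig_bounds(1)[OF Sigc Sigs d0 sym_facts(4)[OF Sigc Sigs d0]])
  have Sigb: "sl * (z \<bullet> z) \<le> z \<bullet> (\<Sigma> *\<^sub>v z) \<and> z \<bullet> (\<Sigma> *\<^sub>v z) \<le> SL * (z \<bullet> z)" if "z \<in> carrier_vec d" for z
    using sym_facts(5,6)[OF Sigc Sigs d0 that] unfolding sl_def SL_def by auto
  define lmA where "lmA = (\<lambda>l. lambda_min (AA l))"
  define LMA where "LMA = (\<lambda>l. lambda_max (AA l))"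
  define lmB where "lmB = (\<lambda>l. lambda_min (BB l))"
  define LMB where "LMB = (\<lambda>l. lambda_max (BB l))"
  have nnA: "lmA l \<ge> 0" "LMA l \<ge> 0" if "l \<in> {1..L}" for l
    unfolding lmA_def LMA_def using psd_lmin_nonneg[OF AAp[OF that] k0] by auto
  have nnB: "lmB l \<ge> 0" "LMB l \<ge> 0" if "l \<in> {1..L}" for l
    unfolding lmB_def LMB_def using psd_lmin_nonneg[OF BBp[OF that] d0] by auto
  have Ab: "lmA l * (y \<bullet> y) \<le> y \<bullet> (AA l *\<^sub>v y) \<and> y \<bullet> (AA l *\<^sub>v y) \<le> LMA l * (y \<bullet> y)"
    if l: "l \<in> {1..L}" and y: "y \<in> carrier_vec k" for l y
    using sym_facts(5,6)[OF AAc[OF l] conjunct2[OF psd_sym[OF AAp[OF l]]] k0 y] unfolding lmA_def LMA_def by auto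
  have Cb: "lmB l * sl * (z \<bullet> z) \<le> z \<bullet> (CC l *\<^sub>v z) \<and> z \<bullet> (CC l *\<^sub>v z) \<le> LMB l * SL * (z \<bullet> z)"
    if l: "l \<in> {1..L}" and z: "z \<in> carrier_vec d" for l z
  proof -
    define u where "u = S *\<^sub>v z"
    have u: "u \<in> carrier_vec d" unfolding u_def using Sc z by auto
    have Bl: "B l \<in> carrier_mat (a (l - 1)) d" by (rule Bc[OF l])
    have "z \<bullet> (CC l *\<^sub>v z) = (transpose_mat (MM l) *\<^sub>v z) \<bullet> (transpose_mat (MM l) *\<^sub>v z)"
      unfolding CC_def by (rule gram_quad[OF MMc[OF l] z])
    also have "transpose_mat (MM l) *\<^sub>v z = B l *\<^sub>v u" unfolding MMT[OF l] u_def using Bl Sc z by auto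
    finally have e1: "z \<bullet> (CC l *\<^sub>v z) = (B l *\<^sub>v u) \<bullet> (B l *\<^sub>v u)" .
    have e2: "u \<bullet> (BB l *\<^sub>v u) = (B l *\<^sub>v u) \<bullet> (B l *\<^sub>v u)"
      using gram_quad[of "transpose_mat (B l)" d "a (l - 1)" u] Bl u unfolding BB_def by auto
    have e3: "u \<bullet> u = z \<bullet> (\<Sigma> *\<^sub>v z)"
    proof -
      have "u \<bullet> u = z \<bullet> (S *\<^sub>v u)" unfolding u_def using sym_sprod[OF Sc Ss z, of "S *\<^sub>v z"] Sc z by auto
      also have "S *\<^sub>v u = \<Sigma> *\<^sub>v z" unfolding u_def SS[symmetric] using Sc z by auto
      finally show ?thesis .
    qed
    note BBs = psd_sym[OF BBp[OF l]]
    have bu: "lmB l * (u \<bullet> u) \<le> u \<bullet> (BB l *\<^sub>v u)" "u \<bullet> (BB l *\<^sub>v u) \<le> LMB l * (u \<bullet> u)"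
      using sym_facts(5,6)[OF conjunct1[OF BBs] conjunct2[OF BBs] d0 u] unfolding lmB_def LMB_def by auto
    have "lmB l * sl * (z \<bullet> z) \<le> lmB l * (u \<bullet> u)" unfolding e3 mult.assoc
      by (rule mult_left_mono, insert Sigb[OF z] nnB[OF l], auto)
    moreover have "LMB l * (u \<bullet> u) \<le> LMB l * SL * (z \<bullet> z)" unfolding e3 mult.assoc
      by (rule mult_left_mono, insert Sigb[OF z] nnB[OF l], auto)
    ultimately show ?thesis using bu unfolding e1 e2[symmetric] by linarith
  qed
  have Tb: "lmA l * (lmB l * sl) * (x \<bullet> x) \<le> x \<bullet> (T l *\<^sub>v x) \<and> x \<bullet> (T l *\<^sub>v x) \<le> LMA l * (LMB l * SL) * (x \<bullet> x)"
    if l: "l \<in> {1..L}" and x: "x \<in> carrier_vec (k*d)" for l x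
    unfolding T_def
    by (rule kron_quad[OF AAc[OF l] CCc[OF l] d0 Ab[OF l] _ nnA(1)[OF l] _ x],
        insert Cb[OF l] nnB(1)[OF l] sl0, auto simp: mult.assoc)
  have smP: "(sigma_min (P l))\<^sup>2 = lmA l" if l: "l \<in> {1..L}" for l
  proof -
    have "sigma_min (P l) = sqrt (lmA l)"
    proof (cases "l = L")
      case True
      have P1: "P l = 1\<^sub>m k" unfolding P_def True using Wdown_base[of a W \<beta> L] aL by simp
      show ?thesis unfolding sigma_min_def lmA_def AA_def P1 by simp
    next
      case False
      hence "a l = m" using am l by auto
      hence "\<not> dim_row (P l) \<ge> dim_col (P l)" using Pc[OF l] mdk by auto
      thus ?thesis unfolding sigma_min_def lmA_def AA_def by simp
    qed
    thus ?thesis using nnA(1)[OF l] by simp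
  qed
  have smB: "(sigma_min (transpose_mat (B l)))\<^sup>2 = lmB l" if l: "l \<in> {1..L}" for l
  proof -
    have "sigma_min (transpose_mat (B l)) = sqrt (lmB l)"
    proof (cases "l = 1")
      case True
      have B1: "B l = 1\<^sub>m d" unfolding B_def True using Wdown_base[of a W \<beta> 0] a0 by simp
      show ?thesis unfolding sigma_min_def lmB_def BB_def B1 by simp
    next
      case False
      hence "a (l - 1) = m" using am l by auto
      hence "\<not> dim_row (transpose_mat (B l)) \<ge> dim_col (transpose_mat (B l))" using Bc[OF l] mdk by auto
      thus ?thesis unfolding sigma_min_def lmB_def BB_def by simp
    qed
    thus ?thesis using nnB(1)[OF l] by simp
  qed
  define XP where "XP = (\<lambda>l. lambda_max (transpose_mat (P l) * P l))"
  define XB where "XB = (\<lambda>l. lambda_max (B l * transpose_mat (B l)))"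
  have SMP: "(sigma_max (P l))\<^sup>2 = XP l" if l: "l \<in> {1..L}" for l
    unfolding sigma_max_def XP_def using psd_lmin_nonneg(2)[OF gram_psd'[OF Pc[OF l]] apos] by simp
  have SMB: "(sigma_max (transpose_mat (B l)))\<^sup>2 = XB l" if l: "l \<in> {1..L}" for l
  proof -
    have "positive_semidefinite (a (l - 1)) (B l * transpose_mat (B l))" by (rule gram_psd[OF Bc[OF l]])
    from psd_lmin_nonneg(2)[OF this apos] show ?thesis unfolding sigma_max_def XB_def by simp
  qed
  have LXP: "LMA l \<le> XP l" if l: "l \<in> {1..L}" for l
    unfolding LMA_def XP_def AA_def by (rule lmax_swap[OF Pc[OF l] k0 apos])
  have LXB: "LMB l \<le> XB l" if l: "l \<in> {1..L}" for l
    using lmax_swap[of "transpose_mat (B l)" d "a (l - 1)"] Bc[OF l] d0 apos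
    unfolding LMB_def XB_def BB_def by auto
  have \<alpha>eq: "\<alpha> l = lmA l * lmB l" if l: "l \<in> {1..L}" for l
    unfolding \<alpha>_def using smP[OF l] smB[OF l] BT[OF l] unfolding P_def by simp
  have lmApos: "lmA l > 0" and lmBpos: "lmB l > 0" if l: "l \<in> {1..L}" for l
  proof -
    have "0 < \<alpha> l" using \<alpha>pos l by blast
    hence "0 < lmA l * lmB l" unfolding \<alpha>eq[OF l] .
    thus "lmA l > 0" "lmB l > 0" using nnA(1)[OF l] nnB(1)[OF l] by (auto simp: zero_less_mult_iff)
  qed
  define Sa where "Sa = (\<Sum>i = 1..L. \<alpha> i)"
  have Sa: "Sa = (\<Sum>l = 1..L. lmA l * lmB l)" unfolding Sa_def by (rule sum.cong, auto simp: \<alpha>eq)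
  have Sapos: "Sa > 0" unfolding Sa
    by (rule sum_pos, insert L1 lmApos lmBpos, auto)
  define Up where "Up = SL * (\<Sum>l = 1..L. LMA l * LMB l)"
  define Lo where "Lo = sl * Sa"
  have Lopos: "Lo > 0" unfolding Lo_def using sl0 Sapos by simp
  have Gbnd: "Lo * (x \<bullet> x) \<le> x \<bullet> (G *\<^sub>v x) \<and> x \<bullet> (G *\<^sub>v x) \<le> Up * (x \<bullet> x)" if x: "x \<in> carrier_vec (k*d)" for x
  proof -
    have "Lo * (x \<bullet> x) = (\<Sum>l = 1..L. lmA l * (lmB l * sl) * (x \<bullet> x))"
      unfolding Lo_def Sa sum_distrib_right sum_distrib_left by (rule sum.cong, auto simp: mult_ac)
    also have "\<dots> \<le> (\<Sum>l = 1..L. x \<bullet> (T l *\<^sub>v x))" by (rule sum_mono, insert Tb[OF _ x], auto)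
    finally have 1: "Lo * (x \<bullet> x) \<le> x \<bullet> (G *\<^sub>v x)" unfolding Gq[OF x] .
    have "(\<Sum>l = 1..L. x \<bullet> (T l *\<^sub>v x)) \<le> (\<Sum>l = 1..L. LMA l * (LMB l * SL) * (x \<bullet> x))"
      by (rule sum_mono, insert Tb[OF _ x], auto)
    also have "\<dots> = Up * (x \<bullet> x)"
      unfolding Up_def sum_distrib_right sum_distrib_left by (rule sum.cong, auto simp: mult_ac)
    finally have 2: "x \<bullet> (G *\<^sub>v x) \<le> Up * (x \<bullet> x)" unfolding Gq[OF x] .
    from 1 2 show ?thesis ..
  qed
  have kd: "k * d > 0" using k0 d0 by simp
  have GPD: "positive_definite (k * d) G" unfolding positive_definite_def
  proof (intro conjI ballI impI)
    show "G \<in> carrier_mat (k * d) (k * d)" "transpose_mat G = G" using Gc Gs by auto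
    fix x :: "real vec" assume x: "x \<in> carrier_vec (k * d)" and x0: "x \<noteq> 0\<^sub>v (k * d)"
    have "0 < Lo * (x \<bullet> x)" using Lopos sprod_self_gt0[OF x x0] by simp
    also have "\<dots> \<le> x \<bullet> (G *\<^sub>v x)" using Gbnd[OF x] by simp
    finally show "0 < x \<bullet> (G *\<^sub>v x)" .
  qed
  have lminG: "Lo \<le> lambda_min G" by (rule lambda_min_ge[OF Gc Gs kd], insert Gbnd, auto)
  have lmaxG: "lambda_max G \<le> Up" by (rule lambda_max_le[OF Gc Gs kd], insert Gbnd, auto)
  have lmm: "lambda_min G \<le> lambda_max G" by (rule eig_bounds(1)[OF Gc Gs kd sym_facts(4)[OF Gc Gs kd]])
  have k1: "kappa_spd G \<le> Up / Lo"
  proof -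
    have p: "lambda_min G > 0" using Lopos lminG by simp
    have "kappa_spd G = lambda_max G / lambda_min G" unfolding kappa_spd_def ..
    also have "\<dots> \<le> Up / lambda_min G" by (rule divide_right_mono[OF lmaxG], insert p, simp)
    also have "\<dots> \<le> Up / Lo" by (rule divide_left_mono[OF lminG], insert lmaxG lmm p Lopos, auto)
    finally show ?thesis .
  qed
  define c where "c = (\<lambda>l. (kappa_rect (Wdown a W \<beta> L (l + 1)))\<^sup>2 * (kappa_rect (Wup a W \<beta> 1 (l - 1)))\<^sup>2)"
  have trm: "\<gamma> l * (kappa_rect (Wdown a W \<beta> L (l + 1)))\<^sup>2 * (kappa_rect (Wup a W \<beta> 1 (l - 1)))\<^sup>2 = XP l * XB l / Sa"
    if l: "l \<in> {1..L}" for l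
  proof -
    have kP: "(kappa_rect (Wdown a W \<beta> L (l + 1)))\<^sup>2 = XP l / lmA l"
    proof -
      have "Wdown a W \<beta> L (l + 1) = P l" unfolding P_def ..
      thus ?thesis using SMP[OF l] smP[OF l] by (simp add: kappa_rect_def power_divide)
    qed
    have kB: "(kappa_rect (Wup a W \<beta> 1 (l - 1)))\<^sup>2 = XB l / lmB l"
      unfolding kappa_rect_def power_divide BT[OF l] SMB[OF l] smB[OF l] ..
    have g: "\<gamma> l = lmA l * lmB l / Sa" unfolding \<gamma>_def Sa_def[symmetric] \<alpha>eq[OF l] ..
    show ?thesis unfolding kP kB g using lmApos[OF l] lmBpos[OF l] by (simp add: field_simps)
  qed
  have k2: "Up / Lo \<le> kappa_spd \<Sigma> * (\<Sum>l = 1..L. \<gamma> l * (kappa_rect (Wdown a W \<beta> L (l + 1)))\<^sup>2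
                                              * (kappa_rect (Wup a W \<beta> 1 (l - 1)))\<^sup>2)"
  proof -
    have "(\<Sum>l = 1..L. \<gamma> l * (kappa_rect (Wdown a W \<beta> L (l + 1)))\<^sup>2 * (kappa_rect (Wup a W \<beta> 1 (l - 1)))\<^sup>2)
       = (\<Sum>l = 1..L. XP l * XB l) / Sa" unfolding sum_divide_distrib by (rule sum.cong[OF refl], rule trm, simp)
    moreover have "(\<Sum>l = 1..L. LMA l * LMB l) \<le> (\<Sum>l = 1..L. XP l * XB l)"
    proof (rule sum_mono)
      fix l assume l: "l \<in> {1..L}"
      have "0 \<le> XP l" using LXP[OF l] nnA(2)[OF l] by linarith
      thus "LMA l * LMB l \<le> XP l * XB l" by (intro mult_mono LXP[OF l] LXB[OF l] nnB(2)[OF l])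
    qed
    ultimately have "(\<Sum>l = 1..L. LMA l * LMB l) / Sa \<le> (\<Sum>l = 1..L. \<gamma> l * (kappa_rect (Wdown a W \<beta> L (l + 1)))\<^sup>2 * (kappa_rect (Wup a W \<beta> 1 (l - 1)))\<^sup>2)"
      using Sapos by (simp add: divide_right_mono)
    hence "SL / sl * ((\<Sum>l = 1..L. LMA l * LMB l) / Sa) \<le> SL / sl * (\<Sum>l = 1..L. \<gamma> l * (kappa_rect (Wdown a W \<beta> L (l + 1)))\<^sup>2 * (kappa_rect (Wup a W \<beta> 1 (l - 1)))\<^sup>2)"
      by (rule mult_left_mono, insert sl0 slSL, auto)
    moreover have "Up / Lo = SL / sl * ((\<Sum>l = 1..L. LMA l * LMB l) / Sa)" unfolding Up_def Lo_def by simp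
    ultimately show ?thesis unfolding kappa_spd_def sl_def[symmetric] SL_def[symmetric] by simp
  qed
  have k3: "kappa_spd \<Sigma> * (\<Sum>l = 1..L. \<gamma> l * (kappa_rect (Wdown a W \<beta> L (l + 1)))\<^sup>2
                                              * (kappa_rect (Wup a W \<beta> 1 (l - 1)))\<^sup>2)
      \<le> kappa_spd \<Sigma> * Max ((\<lambda>l. (kappa_rect (Wdown a W \<beta> L (l + 1)))\<^sup>2
                                    * (kappa_rect (Wup a W \<beta> 1 (l - 1)))\<^sup>2) ` {1..L})"
  proof -
    define Mx where "Mx = Max (c ` {1..L})"
    have cM: "c l \<le> Mx" if "l \<in> {1..L}" for l unfolding Mx_def using that by (intro Max_ge, auto)
    have g0: "\<gamma> l \<ge> 0" if l: "l \<in> {1..L}" for l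
    proof -
      have "0 < \<alpha> l" using \<alpha>pos l by blast
      thus ?thesis unfolding \<gamma>_def Sa_def[symmetric] using Sapos by simp
    qed
    have gs: "(\<Sum>l = 1..L. \<gamma> l) = 1"
    proof -
      have "(\<Sum>l = 1..L. \<gamma> l) = (\<Sum>l = 1..L. \<alpha> l) / Sa" unfolding \<gamma>_def Sa_def sum_divide_distrib ..
      thus ?thesis using Sapos unfolding Sa_def by simp
    qed
    have "(\<Sum>l = 1..L. \<gamma> l * (kappa_rect (Wdown a W \<beta> L (l + 1)))\<^sup>2 * (kappa_rect (Wup a W \<beta> 1 (l - 1)))\<^sup>2)
        = (\<Sum>l = 1..L. \<gamma> l * c l)" unfolding c_def by (simp add: mult.assoc)
    also have "\<dots> \<le> (\<Sum>l = 1..L. \<gamma> l * Mx)" by (rule sum_mono, rule mult_left_mono, insert cM g0, auto)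
    also have "\<dots> = Mx" unfolding sum_distrib_right[symmetric] gs by simp
    finally have "(\<Sum>l = 1..L. \<gamma> l * (kappa_rect (Wdown a W \<beta> L (l + 1)))\<^sup>2 * (kappa_rect (Wup a W \<beta> 1 (l - 1)))\<^sup>2) \<le> Mx" .
    moreover have "kappa_spd \<Sigma> \<ge> 0" unfolding kappa_spd_def sl_def[symmetric] SL_def[symmetric] using sl0 slSL by simp
    ultimately show ?thesis unfolding Mx_def c_def by (intro mult_left_mono)
  qed
  show ?thesis using GPD k1 k2 k3 by linarith
qed

end
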